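(* A (horizontal or vertical) chute move sends a $\mathbf{u}$-compatible subset of $L$ to a $\mathbf{u}$-compatible subset of $L$. In particular it sends a concurrent vertex map $C$ to a concurrent vertex map $C'$ with $C'<_TC$. The analogous statement holds for an inverse (horizontal or vertical) chute move, except that then $C'>_TC$.
   Context: Let $\mathcal{Q}$ be a bipartite quiver with vertex set $V_{\mathcal{Q}}=V_{\rm source}\sqcup V_{\rm target}$ and arrows $h_1,\dots,h_r$, each $h_k$ from $\mathrm{s}(h_k)\in V_{\rm source}$ to $\mathrm{t}(h_k)\in V_{\rm target}$. Let $\mathbf{m}=(m_\gamma)$, $\mathbf{u}=(u_\gamma)$ be tuples of nonnegative integers indexed by $V_{\mathcal{Q}}$. For $k=1,\dots,r$ let $X^{(k)}$ be an $m_{\mathrm{t}(h_k)}\times m_{\mathrm{s}(h_k)}$ matrix of variables $x^{(k)}_{ij}$. For $\alpha\in V_{\rm target}$ with $r_1<\dots<r_s$ the indices of arrows with target $\alpha$, $A_\alpha=[X^{(r_1)}|\cdots|X^{(r_s)}]$; for $\beta\in V_{\rm source}$ with $r'_1<\dots<r'_t$ the indices of arrows with source $\beta$, $A_\beta$ is the stack of $X^{(r'_1)},\dots,X^{(r'_t)}$ top to bottom. $a_\gamma\times b_\gamma$ is the size of $A_\gamma$; $v_\alpha=\sum_{k:\mathrm{t}(h_k)=\alpha}u_{\mathrm{s}(h_k)}$, $v_\beta=\sum_{k:\mathrm{s}(h_k)=\beta}u_{\mathrm{t}(h_k)}$. Standing assumption: $0<u_\gamma\le\min(a_\gamma,b_\gamma)$,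 $u_\alpha\le v_\alpha$, $u_\beta\le v_\beta$. $L=\{(i,j,k):1\le k\le r,1\le i\le m_{\mathrm{t}(h_k)},1\le j\le m_{\mathrm{s}(h_k)}\}$; $\phi_\gamma$ sends a position $(p,q)$ of $A_\gamma$ to $(i,j,k)$ if that entry is $x^{(k)}_{ij}$; $D^\gamma=\phi_\gamma^{-1}(D)$. Coordinates $(i,j)$: $i$ row (downward), $j$ column (rightward). Diagonal chain of size $s$: $\{(i_1,j_1),\dots,(i_s,j_s)\}$ with $i_1<\dots<i_s$, $j_1<\dots<j_s$. $D\subseteq L$ is $\mathbf{u}$-compatible if no $D^\gamma$ contains a diagonal chain of size $u_\gamma+1$; a concurrent vertex map is a maximal (under inclusion) $\mathbf{u}$-compatible subset; all have the same cardinality. Chute moves on $D\subseteq L$: for $\alpha\in V_{\rm target}$, a horizontal chutable rectangle is $[i,i+1]\times[j,j+r-1]$ inside the grid of $A_\alpha$, $r\ge2$, with $D^\alpha\cap([i,i+1]\times[j,j+r-1])=\{(i+1,j),(i,j+r-1),(i+1,j+r-1)\}$; the horizontal chute move replaces $D$ by $D\cup\{\phi_\alpha(i,j)\}\setminus\{\phi_\alpha(i+1,j+r-1)\}$. For $\beta\in V_{\rm source}$, a vertical chutable rectangle is $[i,i+r-1]\times[j,j+1]$ inside the grid of $A_\beta$, $r\ge2$, with $D^\beta\cap$ it $=\{(i+r-1,j),(i,j+1),(i+r-1,j+1)\}$; the vertical chute move replaces $D$ by $D\cup\{\phi_\beta(i,j)\}\setminus\{\phi_\beta(i+r-1,j+1)\}$.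 An inverse chute move is the reverse of a chute move: if $D\to D'$ is a chute move then $D'\dashrightarrow D$ is an inverse chute move. Order: $(i,j,k)<_T(i',j',k')$ iff $k<k'$, or $k=k'$, $i<i'$, or $k=k'$, $i=i'$, $j<j'$. For concurrent vertex maps $C=\{P_1<_T\dots<_TP_N\}$, $C'=\{P'_1<_T\dots<_TP'_N\}$: $C<_TC'$ iff there is $t$ with $P_t<_TP'_t$ and $P_s=P'_s$ for all $s>t$. *)

theory Defs
  imports Main
begin

(* Bipartite quiver data:
   Vs = V_source, Vt = V_target, arrows 1..r, arrow k goes from s k to t k.
   m, u : vertex-indexed tuples.  Positions (i,j,k) of L are 1-based triples. *)

type_synonym pos = "nat \<times> nat \<times> nat"

definition arrK :: "pos \<Rightarrow> nat" where "arrK P = snd (snd P)"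

definition Lset :: "(nat \<Rightarrow> 'v) \<Rightarrow> (nat \<Rightarrow> 'v) \<Rightarrow> nat \<Rightarrow> ('v \<Rightarrow> nat) \<Rightarrow> pos set" where
  "Lset s t r m = {(i,j,k). 1 \<le> k \<and> k \<le> r \<and> 1 \<le> i \<and> i \<le> m (t k) \<and> 1 \<le> j \<and> j \<le> m (s k)}"

definition arrowsT :: "(nat \<Rightarrow> 'v) \<Rightarrow> nat \<Rightarrow> 'v \<Rightarrow> nat set" where
  "arrowsT t r \<alpha> = {k. 1 \<le> k \<and> k \<le> r \<and> t k = \<alpha>}"
definition arrowsS :: "(nat \<Rightarrow> 'v) \<Rightarrow> nat \<Rightarrow> 'v \<Rightarrow> nat set" where
  "arrowsS s r \<beta> = {k. 1 \<le> k \<and> k \<le> r \<and> s k = \<beta>}"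

(* size of A_alpha (alpha target): m_alpha x sum of m_{s(h_k)} *)
definition rowsT :: "(nat \<Rightarrow> 'v) \<Rightarrow> (nat \<Rightarrow> 'v) \<Rightarrow> nat \<Rightarrow> ('v \<Rightarrow> nat) \<Rightarrow> 'v \<Rightarrow> nat" where
  "rowsT s t r m \<alpha> = m \<alpha>"
definition colsT :: "(nat \<Rightarrow> 'v) \<Rightarrow> (nat \<Rightarrow> 'v) \<Rightarrow> nat \<Rightarrow> ('v \<Rightarrow> nat) \<Rightarrow> 'v \<Rightarrow> nat" where
  "colsT s t r m \<alpha> = (\<Sum>k\<in>arrowsT t r \<alpha>. m (s k))"
(* size of A_beta (beta source): sum of m_{t(h_k)} x m_beta *)
definition rowsS :: "(nat \<Rightarrow> 'v) \<Rightarrow> (nat \<Rightarrow> 'v) \<Rightarrow> nat \<Rightarrow> ('v \<Rightarrow> nat) \<Rightarrow> 'v \<Rightarrow> nat" where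
  "rowsS s t r m \<beta> = (\<Sum>k\<in>arrowsS s r \<beta>. m (t k))"
definition colsS :: "(nat \<Rightarrow> 'v) \<Rightarrow> (nat \<Rightarrow> 'v) \<Rightarrow> nat \<Rightarrow> ('v \<Rightarrow> nat) \<Rightarrow> 'v \<Rightarrow> nat" where
  "colsS s t r m \<beta> = m \<beta>"

definition vT :: "(nat \<Rightarrow> 'v) \<Rightarrow> (nat \<Rightarrow> 'v) \<Rightarrow> nat \<Rightarrow> ('v \<Rightarrow> nat) \<Rightarrow> 'v \<Rightarrow> nat" where
  "vT s t r u \<alpha> = (\<Sum>k\<in>arrowsT t r \<alpha>. u (s k))"
definition vS :: "(nat \<Rightarrow> 'v) \<Rightarrow> (nat \<Rightarrow> 'v) \<Rightarrow> nat \<Rightarrow> ('v \<Rightarrow> nat) \<Rightarrow> 'v \<Rightarrow> nat" where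
  "vS s t r u \<beta> = (\<Sum>k\<in>arrowsS s r \<beta>. u (t k))"

(* column offset of block X^(k) inside A_alpha = [X^(r_1)|...|X^(r_s)] *)
definition colOff :: "(nat \<Rightarrow> 'v) \<Rightarrow> (nat \<Rightarrow> 'v) \<Rightarrow> nat \<Rightarrow> ('v \<Rightarrow> nat) \<Rightarrow> 'v \<Rightarrow> nat \<Rightarrow> nat" where
  "colOff s t r m \<alpha> k = (\<Sum>k'\<in>{k' \<in> arrowsT t r \<alpha>. k' < k}. m (s k'))"
(* row offset of block X^(k) inside A_beta (stack top to bottom) *)
definition rowOff :: "(nat \<Rightarrow> 'v) \<Rightarrow> (nat \<Rightarrow> 'v) \<Rightarrow> nat \<Rightarrow> ('v \<Rightarrow> nat) \<Rightarrow> 'v \<Rightarrow> nat \<Rightarrow> nat" where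
  "rowOff s t r m \<beta> k = (\<Sum>k'\<in>{k' \<in> arrowsS s r \<beta>. k' < k}. m (t k'))"

definition gridT :: "(nat \<Rightarrow> 'v) \<Rightarrow> (nat \<Rightarrow> 'v) \<Rightarrow> nat \<Rightarrow> ('v \<Rightarrow> nat) \<Rightarrow> 'v \<Rightarrow> (nat \<times> nat) set" where
  "gridT s t r m \<alpha> = {(p,q). 1 \<le> p \<and> p \<le> rowsT s t r m \<alpha> \<and> 1 \<le> q \<and> q \<le> colsT s t r m \<alpha>}"
definition gridS :: "(nat \<Rightarrow> 'v) \<Rightarrow> (nat \<Rightarrow> 'v) \<Rightarrow> nat \<Rightarrow> ('v \<Rightarrow> nat) \<Rightarrow> 'v \<Rightarrow> (nat \<times> nat) set" where
  "gridS s t r m \<beta> = {(p,q). 1 \<le> p \<and> p \<le> rowsS s t r m \<beta> \<and> 1 \<le> q \<and> q \<le> colsS s t r m \<beta>}"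

(* phi_gamma: entry (p,q) of A_gamma is the variable x^(k)_ij, sent to (i,j,k) *)
definition phiT :: "(nat \<Rightarrow> 'v) \<Rightarrow> (nat \<Rightarrow> 'v) \<Rightarrow> nat \<Rightarrow> ('v \<Rightarrow> nat) \<Rightarrow> 'v \<Rightarrow> nat \<times> nat \<Rightarrow> pos" where
  "phiT s t r m \<alpha> pq = (THE P. \<exists>i j k. P = (i,j,k) \<and> P \<in> Lset s t r m \<and> t k = \<alpha> \<and>
                                   pq = (i, colOff s t r m \<alpha> k + j))"
definition phiS :: "(nat \<Rightarrow> 'v) \<Rightarrow> (nat \<Rightarrow> 'v) \<Rightarrow> nat \<Rightarrow> ('v \<Rightarrow> nat) \<Rightarrow> 'v \<Rightarrow> nat \<times> nat \<Rightarrow> pos" where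
  "phiS s t r m \<beta> pq = (THE P. \<exists>i j k. P = (i,j,k) \<and> P \<in> Lset s t r m \<and> s k = \<beta> \<and>
                                   pq = (rowOff s t r m \<beta> k + i, j))"

definition DT :: "(nat \<Rightarrow> 'v) \<Rightarrow> (nat \<Rightarrow> 'v) \<Rightarrow> nat \<Rightarrow> ('v \<Rightarrow> nat) \<Rightarrow> 'v \<Rightarrow> pos set \<Rightarrow> (nat \<times> nat) set" where
  "DT s t r m \<alpha> D = {pq \<in> gridT s t r m \<alpha>. phiT s t r m \<alpha> pq \<in> D}"
definition DS :: "(nat \<Rightarrow> 'v) \<Rightarrow> (nat \<Rightarrow> 'v) \<Rightarrow> nat \<Rightarrow> ('v \<Rightarrow> nat) \<Rightarrow> 'v \<Rightarrow> pos set \<Rightarrow> (nat \<times> nat) set" where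
  "DS s t r m \<beta> D = {pq \<in> gridS s t r m \<beta>. phiS s t r m \<beta> pq \<in> D}"

definition has_diag_chain :: "(nat \<times> nat) set \<Rightarrow> nat \<Rightarrow> bool" where
  "has_diag_chain S n \<longleftrightarrow> (\<exists>f :: nat \<Rightarrow> nat \<times> nat. (\<forall>a\<in>{1..n}. f a \<in> S) \<and>
      (\<forall>a b. 1 \<le> a \<and> a < b \<and> b \<le> n \<longrightarrow> fst (f a) < fst (f b) \<and> snd (f a) < snd (f b)))"

definition u_compatible :: "'v set \<Rightarrow> 'v set \<Rightarrow> (nat \<Rightarrow> 'v) \<Rightarrow> (nat \<Rightarrow> 'v) \<Rightarrow> nat \<Rightarrow> ('v \<Rightarrow> nat) \<Rightarrow> ('v \<Rightarrow> nat) \<Rightarrow> pos set \<Rightarrow> bool" where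
  "u_compatible Vs Vt s t r m u D \<longleftrightarrow> D \<subseteq> Lset s t r m \<and>
     (\<forall>\<alpha>\<in>Vt. \<not> has_diag_chain (DT s t r m \<alpha> D) (u \<alpha> + 1)) \<and>
     (\<forall>\<beta>\<in>Vs. \<not> has_diag_chain (DS s t r m \<beta> D) (u \<beta> + 1))"

definition concurrent_vertex_map :: "'v set \<Rightarrow> 'v set \<Rightarrow> (nat \<Rightarrow> 'v) \<Rightarrow> (nat \<Rightarrow> 'v) \<Rightarrow> nat \<Rightarrow> ('v \<Rightarrow> nat) \<Rightarrow> ('v \<Rightarrow> nat) \<Rightarrow> pos set \<Rightarrow> bool" where
  "concurrent_vertex_map Vs Vt s t r m u C \<longleftrightarrow> u_compatible Vs Vt s t r m u C \<and>
     (\<forall>D. u_compatible Vs Vt s t r m u D \<and> C \<subseteq> D \<longrightarrow> D = C)"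

definition hchute :: "'v set \<Rightarrow> (nat \<Rightarrow> 'v) \<Rightarrow> (nat \<Rightarrow> 'v) \<Rightarrow> nat \<Rightarrow> ('v \<Rightarrow> nat) \<Rightarrow> pos set \<Rightarrow> pos set \<Rightarrow> bool" where
  "hchute Vt s t r m D D' \<longleftrightarrow> (\<exists>\<alpha>\<in>Vt. \<exists>i j l. 2 \<le> l \<and>
      1 \<le> i \<and> i + 1 \<le> rowsT s t r m \<alpha> \<and> 1 \<le> j \<and> j + l - 1 \<le> colsT s t r m \<alpha> \<and>
      DT s t r m \<alpha> D \<inter> ({i..i+1} \<times> {j..j+l-1}) = {(i+1, j), (i, j+l-1), (i+1, j+l-1)} \<and>
      D' = (D \<union> {phiT s t r m \<alpha> (i, j)}) - {phiT s t r m \<alpha> (i+1, j+l-1)})"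

definition vchute :: "'v set \<Rightarrow> (nat \<Rightarrow> 'v) \<Rightarrow> (nat \<Rightarrow> 'v) \<Rightarrow> nat \<Rightarrow> ('v \<Rightarrow> nat) \<Rightarrow> pos set \<Rightarrow> pos set \<Rightarrow> bool" where
  "vchute Vs s t r m D D' \<longleftrightarrow> (\<exists>\<beta>\<in>Vs. \<exists>i j l. 2 \<le> l \<and>
      1 \<le> i \<and> i + l - 1 \<le> rowsS s t r m \<beta> \<and> 1 \<le> j \<and> j + 1 \<le> colsS s t r m \<beta> \<and>
      DS s t r m \<beta> D \<inter> ({i..i+l-1} \<times> {j..j+1}) = {(i+l-1, j), (i, j+1), (i+l-1, j+1)} \<and>
      D' = (D \<union> {phiS s t r m \<beta> (i, j)}) - {phiS s t r m \<beta> (i+l-1, j+1)})"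

definition chute_move :: "'v set \<Rightarrow> 'v set \<Rightarrow> (nat \<Rightarrow> 'v) \<Rightarrow> (nat \<Rightarrow> 'v) \<Rightarrow> nat \<Rightarrow> ('v \<Rightarrow> nat) \<Rightarrow> pos set \<Rightarrow> pos set \<Rightarrow> bool" where
  "chute_move Vs Vt s t r m D D' \<longleftrightarrow> hchute Vt s t r m D D' \<or> vchute Vs s t r m D D'"

definition inv_chute_move :: "'v set \<Rightarrow> 'v set \<Rightarrow> (nat \<Rightarrow> 'v) \<Rightarrow> (nat \<Rightarrow> 'v) \<Rightarrow> nat \<Rightarrow> ('v \<Rightarrow> nat) \<Rightarrow> pos set \<Rightarrow> pos set \<Rightarrow> bool" where
  "inv_chute_move Vs Vt s t r m D D' \<longleftrightarrow> chute_move Vs Vt s t r m D' D"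

definition ltT :: "pos \<Rightarrow> pos \<Rightarrow> bool" where
  "ltT P P' \<longleftrightarrow> (case P of (i,j,k) \<Rightarrow> case P' of (i',j',k') \<Rightarrow>
      k < k' \<or> (k = k' \<and> i < i') \<or> (k = k' \<and> i = i' \<and> j < j'))"

(* increasing enumeration P_1 <_T ... <_T P_N of a finite set (0-based list) *)
definition enumT :: "pos set \<Rightarrow> pos list" where
  "enumT C = (THE xs. set xs = C \<and> sorted_wrt ltT xs)"

definition setLtT :: "pos set \<Rightarrow> pos set \<Rightarrow> bool" where
  "setLtT C C' \<longleftrightarrow> (let xs = enumT C; ys = enumT C' in length xs = length ys \<and>
      (\<exists>t < length xs. ltT (xs ! t) (ys ! t) \<and> (\<forall>s'. t < s' \<and> s' < length xs \<longrightarrow> xs ! s' = ys ! s')))"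

definition standing :: "'v set \<Rightarrow> 'v set \<Rightarrow> (nat \<Rightarrow> 'v) \<Rightarrow> (nat \<Rightarrow> 'v) \<Rightarrow> nat \<Rightarrow> ('v \<Rightarrow> nat) \<Rightarrow> ('v \<Rightarrow> nat) \<Rightarrow> bool" where
  "standing Vs Vt s t r m u \<longleftrightarrow> finite Vs \<and> finite Vt \<and> Vs \<inter> Vt = {} \<and>
     (\<forall>k\<in>{1..r}. s k \<in> Vs \<and> t k \<in> Vt) \<and>
     (\<forall>\<alpha>\<in>Vt. 0 < u \<alpha> \<and> u \<alpha> \<le> min (rowsT s t r m \<alpha>) (colsT s t r m \<alpha>) \<and> u \<alpha> \<le> vT s t r u \<alpha>) \<and>
     (\<forall>\<beta>\<in>Vs. 0 < u \<beta> \<and> u \<beta> \<le> min (rowsS s t r m \<beta>) (colsS s t r m \<beta>) \<and> u \<beta> \<le> vS s t r u \<beta>)"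

end

theory Submission
  imports Defs
begin

definition off :: "nat set \<Rightarrow> (nat \<Rightarrow> nat) \<Rightarrow> nat \<Rightarrow> nat" where
  "off S w k = sum w {k'\<in>S. k' < k}"

lemma off_split:
  assumes "finite S" "k \<in> S"
  shows "sum w {k'\<in>S. k' \<le> k} = off S w k + w k"
proof -
  have "{k'\<in>S. k' \<le> k} = insert k {k'\<in>S. k' < k}" using assms by auto
  thus ?thesis unfolding off_def using assms by simp
qed

lemma off_mono:
  assumes "finite S" "k1 \<in> S" "k1 < k2"
  shows "off S w k1 + w k1 \<le> off S w k2"
proof -
  have "{k'\<in>S. k' \<le> k1} \<subseteq> {k'\<in>S. k' < k2}" using assms by auto
  hence "sum w {k'\<in>S. k' \<le> k1} \<le> sum w {k'\<in>S. k' < k2}"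
    by (intro sum_mono2) (use assms in auto)
  thus ?thesis using off_split[OF assms(1,2)] unfolding off_def by simp
qed

lemma off_le_sum:
  assumes "finite S" "k \<in> S"
  shows "off S w k + w k \<le> sum w S"
proof -
  have "{k'\<in>S. k' \<le> k} \<subseteq> S" by auto
  hence "sum w {k'\<in>S. k' \<le> k} \<le> sum w S"
    by (intro sum_mono2) (use assms in auto)
  thus ?thesis using off_split[OF assms(1,2)] by simp
qed

lemma off_order:
  assumes "finite S" "k1 \<in> S" "k2 \<in> S" "a \<le> w k1" "b \<le> w k2" "1 \<le> a"
    "off S w k1 + a < off S w k2 + b"
  shows "k1 \<le> k2"
proof (rule ccontr)
  assume "\<not> k1 \<le> k2"
  hence "k2 < k1" by simp
  from off_mono[OF assms(1) assms(3) this, of w] have "off S w k2 + w k2 \<le> off S w k1" .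
  thus False using assms by linarith
qed

lemma off_inj:
  assumes "finite S" "k1 \<in> S" "k2 \<in> S" "1 \<le> a" "a \<le> w k1" "1 \<le> b" "b \<le> w k2"
    "off S w k1 + a = off S w k2 + b"
  shows "k1 = k2 \<and> a = b"
proof -
  have "\<not> k1 < k2"
  proof
    assume "k1 < k2"
    from off_mono[OF assms(1) assms(2) this, of w] show False using assms by linarith
  qed
  moreover have "\<not> k2 < k1"
  proof
    assume "k2 < k1"
    from off_mono[OF assms(1) assms(3) this, of w] show False using assms by linarith
  qed
  ultimately have "k1 = k2" by simp
  thus ?thesis using assms by simp
qed

lemma off_cover:
  assumes "finite S" "1 \<le> q" "q \<le> sum w S"
  shows "\<exists>k\<in>S. off S w k < q \<and> q \<le> off S w k + w k"
proof -
  have "S \<noteq> {}" using assms by auto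
  define k0 where "k0 = Min S"
  have k0S: "k0 \<in> S" unfolding k0_def using assms \<open>S \<noteq> {}\<close> by simp
  have "{k'\<in>S. k' < k0} = {}" unfolding k0_def using assms(1) by (auto dest: Min_le[rotated])
  hence "off S w k0 = 0" unfolding off_def by (metis sum.empty)
  define K where "K = {k\<in>S. off S w k < q}"
  have Kfin: "finite K" unfolding K_def using assms by simp
  have "k0 \<in> K" unfolding K_def using k0S \<open>off S w k0 = 0\<close> assms by simp
  hence Kne: "K \<noteq> {}" by auto
  define k where "k = Max K"
  have kK: "k \<in> K" unfolding k_def using Kfin Kne by simp
  have kmax: "\<And>k'. k' \<in> K \<Longrightarrow> k' \<le> k" unfolding k_def using Kfin by simp
  show ?thesis
  proof (rule ccontr)
    assume nq: "\<not> ?thesis"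
    have kS: "k \<in> S" and ko: "off S w k < q" using kK unfolding K_def by auto
    hence big: "off S w k + w k < q" using nq by force
    show False
    proof (cases "{k'\<in>S. k < k'} = {}")
      case True
      hence "{k'\<in>S. k' \<le> k} = S" by force
      thus False using off_split[OF assms(1) kS, of w] big assms by simp
    next
      case False
      define k2 where "k2 = Min {k'\<in>S. k < k'}"
      have k2in: "k2 \<in> {k'\<in>S. k < k'}" unfolding k2_def using False assms by (intro Min_in) auto
      have k2min: "\<And>k'. k' \<in> S \<Longrightarrow> k < k' \<Longrightarrow> k2 \<le> k'" unfolding k2_def using assms by simp
      have "{k'\<in>S. k' < k2} = {k'\<in>S. k' \<le> k}"
        using k2in k2min by force
      hence "off S w k2 = off S w k + w k" using off_split[OF assms(1) kS, of w] unfolding off_def by simp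
      hence "k2 \<in> K" unfolding K_def using k2in big by simp
      thus False using kmax k2in by force
    qed
  qed
qed

definition lt2 :: "nat \<times> nat \<Rightarrow> nat \<times> nat \<Rightarrow> bool" where
  "lt2 a b \<longleftrightarrow> fst a < fst b \<and> snd a < snd b"

definition okr :: "nat \<times> nat \<Rightarrow> nat \<times> nat \<Rightarrow> nat \<times> nat \<Rightarrow> bool" where
  "okr p c x \<longleftrightarrow> (lt2 x p \<longrightarrow> lt2 x c) \<and> (lt2 p x \<longrightarrow> lt2 c x)"

lemma chain_mono:
  assumes "has_diag_chain S n" "S \<subseteq> S'"
  shows "has_diag_chain S' n"
  using assms unfolding has_diag_chain_def by blast

lemma chain_replace1:
  assumes "has_diag_chain S0 n" "S0 \<subseteq> insert p S" "S \<subseteq> S2" "c \<in> S2"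
    and ok: "\<And>x. x \<in> S \<Longrightarrow> lt2 x p \<or> lt2 p x \<Longrightarrow> okr p c x"
  shows "has_diag_chain S2 n"
proof -
  obtain f where fin: "\<forall>a\<in>{1..n}. f a \<in> S0"
    and fm: "\<forall>a b. 1 \<le> a \<and> a < b \<and> b \<le> n \<longrightarrow> fst (f a) < fst (f b) \<and> snd (f a) < snd (f b)"
    using assms(1) unfolding has_diag_chain_def by blast
  show ?thesis
  proof (cases "\<exists>a\<in>{1..n}. f a = p")
    case False
    hence "\<forall>a\<in>{1..n}. f a \<in> S2" using fin assms(2,3) by blast
    thus ?thesis using fm unfolding has_diag_chain_def by blast
  next
    case True
    then obtain a0 where a0: "a0 \<in> {1..n}" "f a0 = p" by blast
    have other: "f b \<in> S \<and> (lt2 (f b) p \<or> lt2 p (f b))" if "b \<in> {1..n}" "b \<noteq> a0" for b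
    proof -
      have "lt2 (f b) p \<or> lt2 p (f b)"
        using that a0 fm unfolding lt2_def
        by (cases "b < a0") (metis atLeastAtMost_iff linorder_neqE_nat)+
      moreover hence "f b \<noteq> p" unfolding lt2_def by auto
      ultimately show ?thesis using fin that assms(2) by blast
    qed
    define g where "g = f(a0 := c)"
    have "\<forall>a\<in>{1..n}. g a \<in> S2" unfolding g_def using other assms(3,4) by auto
    moreover have "\<forall>a b. 1 \<le> a \<and> a < b \<and> b \<le> n \<longrightarrow> fst (g a) < fst (g b) \<and> snd (g a) < snd (g b)"
    proof (intro allI impI)
      fix a b assume ab: "1 \<le> a \<and> a < b \<and> b \<le> n"
      show "fst (g a) < fst (g b) \<and> snd (g a) < snd (g b)"
      proof (cases "a = a0")
        case True
        hence "b \<noteq> a0" "b \<in> {1..n}" using ab by auto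
        hence "okr p c (f b)" using other ok by blast
        moreover have "lt2 p (f b)" using fm ab True a0 unfolding lt2_def by auto
        ultimately show ?thesis unfolding g_def okr_def lt2_def using True \<open>b \<noteq> a0\<close> by auto
      next
        case False
        note aF = False
        show ?thesis
        proof (cases "b = a0")
          case True
          hence "a \<in> {1..n}" using ab by auto
          hence "okr p c (f a)" using other ok aF by blast
          moreover have "lt2 (f a) p" using fm ab True a0 unfolding lt2_def by auto
          ultimately show ?thesis unfolding g_def okr_def lt2_def using True aF by auto
        next
          case False
          thus ?thesis unfolding g_def using aF fm ab by auto
        qed
      qed
    qed
    ultimately show ?thesis unfolding has_diag_chain_def by blast
  qed
qed

lemma chain_replace:
  assumes "has_diag_chain S0 n" "S0 \<subseteq> insert p S" "S \<subseteq> S2" "c1 \<in> S2" "c2 \<in> S2"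
    and cond: "\<And>x y. x \<in> S \<Longrightarrow> y \<in> S \<Longrightarrow> x = y \<or> lt2 x y \<or> lt2 y x \<Longrightarrow>
        lt2 x p \<or> lt2 p x \<Longrightarrow> lt2 y p \<or> lt2 p y \<Longrightarrow> okr p c1 x \<or> okr p c2 y"
  shows "has_diag_chain S2 n"
proof -
  obtain f where fin: "\<forall>a\<in>{1..n}. f a \<in> S0"
    and fm: "\<forall>a b. 1 \<le> a \<and> a < b \<and> b \<le> n \<longrightarrow> fst (f a) < fst (f b) \<and> snd (f a) < snd (f b)"
    using assms(1) unfolding has_diag_chain_def by blast
  define S0' where "S0' = f ` {1..n}"
  have c0: "has_diag_chain S0' n" unfolding S0'_def has_diag_chain_def using fm by blast
  have sub: "S0' \<subseteq> insert p (S \<inter> S0')" using fin assms(2) unfolding S0'_def by blast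
  have comp: "x = y \<or> lt2 x y \<or> lt2 y x" if xy: "x \<in> S0'" "y \<in> S0'" for x y
  proof -
    obtain a b where "a \<in> {1..n}" "b \<in> {1..n}" "x = f a" "y = f b" using xy unfolding S0'_def by blast
    thus ?thesis using fm unfolding lt2_def by (metis atLeastAtMost_iff linorder_neqE_nat)
  qed
  have "(\<forall>x\<in>S \<inter> S0'. lt2 x p \<or> lt2 p x \<longrightarrow> okr p c1 x) \<or> (\<forall>y\<in>S \<inter> S0'. lt2 y p \<or> lt2 p y \<longrightarrow> okr p c2 y)"
    using cond comp by blast
  thus ?thesis
  proof
    assume h: "\<forall>x\<in>S \<inter> S0'. lt2 x p \<or> lt2 p x \<longrightarrow> okr p c1 x"
    show ?thesis by (rule chain_replace1[OF c0 sub _ assms(4)]) (use assms(3) h in auto)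
  next
    assume h: "\<forall>x\<in>S \<inter> S0'. lt2 x p \<or> lt2 p x \<longrightarrow> okr p c2 x"
    show ?thesis by (rule chain_replace1[OF c0 sub _ assms(5)]) (use assms(3) h in auto)
  qed
qed

lemma AR1:
  assumes "a < b" and F: "\<forall>x\<in>S. fst x = r+1 \<longrightarrow> a < snd x \<longrightarrow> b < snd x"
  shows "\<And>x y. x \<in> S \<Longrightarrow> y \<in> S \<Longrightarrow> x = y \<or> lt2 x y \<or> lt2 y x \<Longrightarrow>
        lt2 x (r,a) \<or> lt2 (r,a) x \<Longrightarrow> lt2 y (r,a) \<or> lt2 (r,a) y \<Longrightarrow> okr (r,a) (r+1,a) x \<or> okr (r,a) (r,b) y"
proof -
  fix x y assume xy: "x \<in> S" "y \<in> S" "x = y \<or> lt2 x y \<or> lt2 y x"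
  have Fx: "fst x = r+1 \<longrightarrow> a < snd x \<longrightarrow> b < snd x" using F xy by blast
  have Fy: "fst y = r+1 \<longrightarrow> a < snd y \<longrightarrow> b < snd y" using F xy by blast
  show "okr (r,a) (r+1,a) x \<or> okr (r,a) (r,b) y"
    using xy(3) Fx Fy assms(1) unfolding okr_def lt2_def by (cases x, cases y) auto
qed

lemma AR1':
  assumes F: "\<forall>x\<in>S. fst x = r+1 \<longrightarrow> a < snd x \<longrightarrow> False"
  shows "\<And>x y. x \<in> S \<Longrightarrow> y \<in> S \<Longrightarrow> x = y \<or> lt2 x y \<or> lt2 y x \<Longrightarrow>
        lt2 x (r,a) \<or> lt2 (r,a) x \<Longrightarrow> lt2 y (r,a) \<or> lt2 (r,a) y \<Longrightarrow> okr (r,a) (r+1,a) x \<or> okr (r,a) (r+1,a) y"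
proof -
  fix x y assume xy: "x \<in> S" "y \<in> S"
  have Fx: "fst x = r+1 \<longrightarrow> a < snd x \<longrightarrow> False" using F xy by blast
  show "okr (r,a) (r+1,a) x \<or> okr (r,a) (r+1,a) y"
    using Fx unfolding okr_def lt2_def by (cases x) auto
qed

lemma AR3:
  assumes "a < b" and F: "\<forall>x\<in>S. fst x = r \<longrightarrow> snd x < b \<longrightarrow> snd x < a"
  shows "\<And>x y. x \<in> S \<Longrightarrow> y \<in> S \<Longrightarrow> x = y \<or> lt2 x y \<or> lt2 y x \<Longrightarrow>
        lt2 x (r+1,b) \<or> lt2 (r+1,b) x \<Longrightarrow> lt2 y (r+1,b) \<or> lt2 (r+1,b) y \<Longrightarrow> okr (r+1,b) (r,b) x \<or> okr (r+1,b) (r+1,a) y"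
proof -
  fix x y assume xy: "x \<in> S" "y \<in> S" "x = y \<or> lt2 x y \<or> lt2 y x"
  have Fx: "fst x = r \<longrightarrow> snd x < b \<longrightarrow> snd x < a" using F xy by blast
  have Fy: "fst y = r \<longrightarrow> snd y < b \<longrightarrow> snd y < a" using F xy by blast
  show "okr (r+1,b) (r,b) x \<or> okr (r+1,b) (r+1,a) y"
    using xy(3) Fx Fy assms(1) unfolding okr_def lt2_def by (cases x, cases y) auto
qed

lemma AR3':
  assumes F: "\<forall>x\<in>S. fst x = r \<longrightarrow> snd x < b \<longrightarrow> False"
  shows "\<And>x y. x \<in> S \<Longrightarrow> y \<in> S \<Longrightarrow> x = y \<or> lt2 x y \<or> lt2 y x \<Longrightarrow>
        lt2 x (r+1,b) \<or> lt2 (r+1,b) x \<Longrightarrow> lt2 y (r+1,b) \<or> lt2 (r+1,b) y \<Longrightarrow> okr (r+1,b) (r,b) x \<or> okr (r+1,b) (r,b) y"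
proof -
  fix x y assume xy: "x \<in> S" "y \<in> S"
  have Fx: "fst x = r \<longrightarrow> snd x < b \<longrightarrow> False" using F xy by blast
  show "okr (r+1,b) (r,b) x \<or> okr (r+1,b) (r,b) y"
    using Fx unfolding okr_def lt2_def by (cases x) auto
qed

context
  fixes s t :: "nat \<Rightarrow> 'v" and r :: nat and m :: "'v \<Rightarrow> nat"
begin

definition LT :: "'v \<Rightarrow> pos set" where
  "LT \<alpha> = {X \<in> Lset s t r m. t (arrK X) = \<alpha>}"
definition LS :: "'v \<Rightarrow> pos set" where
  "LS \<beta> = {X \<in> Lset s t r m. s (arrK X) = \<beta>}"
definition posT :: "'v \<Rightarrow> pos \<Rightarrow> nat \<times> nat" where
  "posT \<alpha> X = (fst X, colOff s t r m \<alpha> (arrK X) + fst (snd X))"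
definition posS :: "'v \<Rightarrow> pos \<Rightarrow> nat \<times> nat" where
  "posS \<beta> X = (rowOff s t r m \<beta> (arrK X) + fst X, fst (snd X))"

lemma colOff_off: "colOff s t r m \<alpha> k = off (arrowsT t r \<alpha>) (\<lambda>k. m (s k)) k"
  unfolding colOff_def off_def by simp
lemma rowOff_off: "rowOff s t r m \<beta> k = off (arrowsS s r \<beta>) (\<lambda>k. m (t k)) k"
  unfolding rowOff_def off_def by simp
lemma fin_arrowsT: "finite (arrowsT t r \<alpha>)"
  unfolding arrowsT_def by (rule finite_subset[of _ "{1..r}"]) auto
lemma fin_arrowsS: "finite (arrowsS s r \<beta>)"
  unfolding arrowsS_def by (rule finite_subset[of _ "{1..r}"]) auto

lemma LT_iff: "X \<in> LT \<alpha> \<longleftrightarrow> (\<exists>i j k. X = (i,j,k) \<and> k \<in> arrowsT t r \<alpha> \<and> 1 \<le> i \<and> i \<le> m \<alpha> \<and> 1 \<le> j \<and> j \<le> m (s k))"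
  unfolding LT_def Lset_def arrowsT_def arrK_def by auto
lemma LS_iff: "X \<in> LS \<beta> \<longleftrightarrow> (\<exists>i j k. X = (i,j,k) \<and> k \<in> arrowsS s r \<beta> \<and> 1 \<le> i \<and> i \<le> m (t k) \<and> 1 \<le> j \<and> j \<le> m \<beta>)"
  unfolding LS_def Lset_def arrowsS_def arrK_def by auto

lemma posT_grid: "X \<in> LT \<alpha> \<Longrightarrow> posT \<alpha> X \<in> gridT s t r m \<alpha>"
proof -
  assume "X \<in> LT \<alpha>"
  then obtain i j k where X: "X = (i,j,k)" "k \<in> arrowsT t r \<alpha>" "1 \<le> i" "i \<le> m \<alpha>" "1 \<le> j" "j \<le> m (s k)"
    unfolding LT_iff by blast
  have "off (arrowsT t r \<alpha>) (\<lambda>k. m (s k)) k + m (s k) \<le> sum (\<lambda>k. m (s k)) (arrowsT t r \<alpha>)"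
    using off_le_sum[OF fin_arrowsT X(2)] by simp
  thus ?thesis using X unfolding gridT_def posT_def rowsT_def colsT_def colOff_off arrK_def by auto
qed

lemma posS_grid: "X \<in> LS \<beta> \<Longrightarrow> posS \<beta> X \<in> gridS s t r m \<beta>"
proof -
  assume "X \<in> LS \<beta>"
  then obtain i j k where X: "X = (i,j,k)" "k \<in> arrowsS s r \<beta>" "1 \<le> i" "i \<le> m (t k)" "1 \<le> j" "j \<le> m \<beta>"
    unfolding LS_iff by blast
  have "off (arrowsS s r \<beta>) (\<lambda>k. m (t k)) k + m (t k) \<le> sum (\<lambda>k. m (t k)) (arrowsS s r \<beta>)"
    using off_le_sum[OF fin_arrowsS X(2)] by simp
  thus ?thesis using X unfolding gridS_def posS_def rowsS_def colsS_def rowOff_off arrK_def by auto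
qed

lemma posT_inj: "X \<in> LT \<alpha> \<Longrightarrow> Y \<in> LT \<alpha> \<Longrightarrow> posT \<alpha> X = posT \<alpha> Y \<Longrightarrow> X = Y"
proof -
  assume a: "X \<in> LT \<alpha>" "Y \<in> LT \<alpha>" "posT \<alpha> X = posT \<alpha> Y"
  obtain i j k where X: "X = (i,j,k)" "k \<in> arrowsT t r \<alpha>" "1 \<le> i" "i \<le> m \<alpha>" "1 \<le> j" "j \<le> m (s k)"
    using a(1) unfolding LT_iff by blast
  obtain i' j' k' where Y: "Y = (i',j',k')" "k' \<in> arrowsT t r \<alpha>" "1 \<le> i'" "i' \<le> m \<alpha>" "1 \<le> j'" "j' \<le> m (s k')"
    using a(2) unfolding LT_iff by blast
  have "off (arrowsT t r \<alpha>) (\<lambda>k. m (s k)) k + j = off (arrowsT t r \<alpha>) (\<lambda>k. m (s k)) k' + j'" "i = i'"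
    using a(3) X Y unfolding posT_def colOff_off arrK_def by auto
  with off_inj[OF fin_arrowsT X(2) Y(2) X(5) _ Y(5)] X Y show "X = Y" by auto
qed

lemma posS_inj: "X \<in> LS \<beta> \<Longrightarrow> Y \<in> LS \<beta> \<Longrightarrow> posS \<beta> X = posS \<beta> Y \<Longrightarrow> X = Y"
proof -
  assume a: "X \<in> LS \<beta>" "Y \<in> LS \<beta>" "posS \<beta> X = posS \<beta> Y"
  obtain i j k where X: "X = (i,j,k)" "k \<in> arrowsS s r \<beta>" "1 \<le> i" "i \<le> m (t k)" "1 \<le> j" "j \<le> m \<beta>"
    using a(1) unfolding LS_iff by blast
  obtain i' j' k' where Y: "Y = (i',j',k')" "k' \<in> arrowsS s r \<beta>" "1 \<le> i'" "i' \<le> m (t k')" "1 \<le> j'" "j' \<le> m \<beta>"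
    using a(2) unfolding LS_iff by blast
  have "off (arrowsS s r \<beta>) (\<lambda>k. m (t k)) k + i = off (arrowsS s r \<beta>) (\<lambda>k. m (t k)) k' + i'" "j = j'"
    using a(3) X Y unfolding posS_def rowOff_off arrK_def by auto
  with off_inj[OF fin_arrowsS X(2) Y(2) X(3) _ Y(3)] X Y show "X = Y" by auto
qed

lemma posT_surj: "g \<in> gridT s t r m \<alpha> \<Longrightarrow> \<exists>X\<in>LT \<alpha>. posT \<alpha> X = g"
proof -
  assume "g \<in> gridT s t r m \<alpha>"
  then obtain p q where g: "g = (p,q)" "1 \<le> p" "p \<le> m \<alpha>" "1 \<le> q" "q \<le> sum (\<lambda>k. m (s k)) (arrowsT t r \<alpha>)"
    unfolding gridT_def rowsT_def colsT_def by auto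
  obtain k where k: "k \<in> arrowsT t r \<alpha>" "off (arrowsT t r \<alpha>) (\<lambda>k. m (s k)) k < q"
    "q \<le> off (arrowsT t r \<alpha>) (\<lambda>k. m (s k)) k + m (s k)"
    using off_cover[OF fin_arrowsT g(4) g(5)] by blast
  define X where "X = (p, q - off (arrowsT t r \<alpha>) (\<lambda>k. m (s k)) k, k)"
  have "X \<in> LT \<alpha>" unfolding LT_iff X_def using k g by auto
  moreover have "posT \<alpha> X = g" unfolding X_def posT_def colOff_off arrK_def using k g by auto
  ultimately show ?thesis by blast
qed

lemma posS_surj: "g \<in> gridS s t r m \<beta> \<Longrightarrow> \<exists>X\<in>LS \<beta>. posS \<beta> X = g"
proof -
  assume "g \<in> gridS s t r m \<beta>"
  then obtain p q where g: "g = (p,q)" "1 \<le> q" "q \<le> m \<beta>" "1 \<le> p" "p \<le> sum (\<lambda>k. m (t k)) (arrowsS s r \<beta>)"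
    unfolding gridS_def rowsS_def colsS_def by auto
  obtain k where k: "k \<in> arrowsS s r \<beta>" "off (arrowsS s r \<beta>) (\<lambda>k. m (t k)) k < p"
    "p \<le> off (arrowsS s r \<beta>) (\<lambda>k. m (t k)) k + m (t k)"
    using off_cover[OF fin_arrowsS g(4) g(5)] by blast
  define X where "X = (p - off (arrowsS s r \<beta>) (\<lambda>k. m (t k)) k, q, k)"
  have "X \<in> LS \<beta>" unfolding LS_iff X_def using k g by auto
  moreover have "posS \<beta> X = g" unfolding X_def posS_def rowOff_off arrK_def using k g by auto
  ultimately show ?thesis by blast
qed

lemma phiT_eq: "X \<in> LT \<alpha> \<Longrightarrow> phiT s t r m \<alpha> (posT \<alpha> X) = X"
proof -
  assume X: "X \<in> LT \<alpha>"
  have iff: "(\<exists>i j k. P = (i,j,k) \<and> P \<in> Lset s t r m \<and> t k = \<alpha> \<and> pq = (i, colOff s t r m \<alpha> k + j))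
      \<longleftrightarrow> P \<in> LT \<alpha> \<and> posT \<alpha> P = pq" for P pq
    unfolding LT_def posT_def arrK_def by (cases P) auto
  show ?thesis unfolding phiT_def iff
    by (rule the_equality) (use X posT_inj[of _ \<alpha>] in blast)+
qed

lemma phiS_eq: "X \<in> LS \<beta> \<Longrightarrow> phiS s t r m \<beta> (posS \<beta> X) = X"
proof -
  assume X: "X \<in> LS \<beta>"
  have iff: "(\<exists>i j k. P = (i,j,k) \<and> P \<in> Lset s t r m \<and> s k = \<beta> \<and> pq = (rowOff s t r m \<beta> k + i, j))
      \<longleftrightarrow> P \<in> LS \<beta> \<and> posS \<beta> P = pq" for P pq
    unfolding LS_def posS_def arrK_def by (cases P) auto
  show ?thesis unfolding phiS_def iff
    by (rule the_equality) (use X posS_inj[of _ \<beta>] in blast)+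
qed

lemma phiT_in: "g \<in> gridT s t r m \<alpha> \<Longrightarrow> phiT s t r m \<alpha> g \<in> LT \<alpha> \<and> posT \<alpha> (phiT s t r m \<alpha> g) = g"
  using posT_surj phiT_eq by metis
lemma phiS_in: "g \<in> gridS s t r m \<beta> \<Longrightarrow> phiS s t r m \<beta> g \<in> LS \<beta> \<and> posS \<beta> (phiS s t r m \<beta> g) = g"
  using posS_surj phiS_eq by metis

lemma phiT_inj: "g \<in> gridT s t r m \<alpha> \<Longrightarrow> g' \<in> gridT s t r m \<alpha> \<Longrightarrow> phiT s t r m \<alpha> g = phiT s t r m \<alpha> g' \<Longrightarrow> g = g'"
  using phiT_in by metis
lemma phiS_inj: "g \<in> gridS s t r m \<beta> \<Longrightarrow> g' \<in> gridS s t r m \<beta> \<Longrightarrow> phiS s t r m \<beta> g = phiS s t r m \<beta> g' \<Longrightarrow> g = g'"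
  using phiS_in by metis

end

context
  fixes s t :: "nat \<Rightarrow> 'v" and r :: nat and m :: "'v \<Rightarrow> nat"
begin

lemma gridT_iff: "(p,q) \<in> gridT s t r m \<alpha> \<longleftrightarrow> 1 \<le> p \<and> p \<le> rowsT s t r m \<alpha> \<and> 1 \<le> q \<and> q \<le> colsT s t r m \<alpha>"
  unfolding gridT_def by simp

lemma hconf:
  assumes "1 \<le> i" "i+1 \<le> rowsT s t r m \<alpha>" "1 \<le> c0" "c0 < c1" "c1 \<le> colsT s t r m \<alpha>"
  shows "\<exists>aP bQ kP kQ. phiT s t r m \<alpha> (i,c0) = (i,aP,kP) \<and> phiT s t r m \<alpha> (i+1,c0) = (i+1,aP,kP)
     \<and> phiT s t r m \<alpha> (i,c1) = (i,bQ,kQ) \<and> phiT s t r m \<alpha> (i+1,c1) = (i+1,bQ,kQ)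
     \<and> (i,aP,kP) \<in> LT s t r m \<alpha> \<and> (i+1,aP,kP) \<in> LT s t r m \<alpha> \<and> (i,bQ,kQ) \<in> LT s t r m \<alpha> \<and> (i+1,bQ,kQ) \<in> LT s t r m \<alpha>
     \<and> colOff s t r m \<alpha> kP + aP = c0 \<and> colOff s t r m \<alpha> kQ + bQ = c1
     \<and> kP \<in> arrowsT t r \<alpha> \<and> kQ \<in> arrowsT t r \<alpha> \<and> 1 \<le> aP \<and> aP \<le> m (s kP) \<and> 1 \<le> bQ \<and> bQ \<le> m (s kQ)
     \<and> kP \<le> kQ \<and> (kP = kQ \<longrightarrow> aP < bQ)"
proof -
  have g1: "(i,c0) \<in> gridT s t r m \<alpha>" "(i,c1) \<in> gridT s t r m \<alpha>" using assms unfolding gridT_iff by auto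
  obtain P where P: "P = phiT s t r m \<alpha> (i,c0)" by simp
  obtain T where T: "T = phiT s t r m \<alpha> (i,c1)" by simp
  have PL: "P \<in> LT s t r m \<alpha>" "posT s t r m \<alpha> P = (i,c0)" using phiT_in[OF g1(1)] P by auto
  have TL: "T \<in> LT s t r m \<alpha>" "posT s t r m \<alpha> T = (i,c1)" using phiT_in[OF g1(2)] T by auto
  obtain i1 aP kP where P3: "P = (i1,aP,kP)" "kP \<in> arrowsT t r \<alpha>" "1 \<le> i1" "i1 \<le> m \<alpha>" "1 \<le> aP" "aP \<le> m (s kP)"
    using PL(1) unfolding LT_iff by blast
  obtain i2 bQ kQ where T3: "T = (i2,bQ,kQ)" "kQ \<in> arrowsT t r \<alpha>" "1 \<le> i2" "i2 \<le> m \<alpha>" "1 \<le> bQ" "bQ \<le> m (s kQ)"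
    using TL(1) unfolding LT_iff by blast
  have i1: "i1 = i" "colOff s t r m \<alpha> kP + aP = c0" using PL(2) P3 unfolding posT_def arrK_def by auto
  have i2: "i2 = i" "colOff s t r m \<alpha> kQ + bQ = c1" using TL(2) T3 unfolding posT_def arrK_def by auto
  have im: "i + 1 \<le> m \<alpha>" using assms unfolding rowsT_def by simp
  have BL: "(i+1,aP,kP) \<in> LT s t r m \<alpha>" using P3 im unfolding LT_iff by auto
  have QL: "(i+1,bQ,kQ) \<in> LT s t r m \<alpha>" using T3 im unfolding LT_iff by auto
  have B: "phiT s t r m \<alpha> (i+1,c0) = (i+1,aP,kP)"
    using phiT_eq[OF BL] i1 unfolding posT_def arrK_def by simp
  have Q: "phiT s t r m \<alpha> (i+1,c1) = (i+1,bQ,kQ)"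
    using phiT_eq[OF QL] i2 unfolding posT_def arrK_def by simp
  have lt: "off (arrowsT t r \<alpha>) (\<lambda>k. m (s k)) kP + aP < off (arrowsT t r \<alpha>) (\<lambda>k. m (s k)) kQ + bQ"
    using i1 i2 assms(4) unfolding colOff_off by simp
  have "kP \<le> kQ" by (rule off_order[OF fin_arrowsT P3(2) T3(2) _ _ P3(5) lt]) (use P3 T3 in auto)
  moreover have "kP = kQ \<longrightarrow> aP < bQ" using lt by auto
  ultimately show ?thesis using P3 T3 i1 i2 B Q BL QL P T PL TL by auto
qed

lemma decodeS:
  assumes "X \<in> LS s t r m \<beta>" "k \<in> arrowsS s r \<beta>" "1 \<le> i" "i \<le> m (t k)"
    "fst (posS s t r m \<beta> X) = rowOff s t r m \<beta> k + i"
  shows "X = (i, snd (posS s t r m \<beta> X), k)"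
proof -
  obtain i1 j1 k1 where X: "X = (i1,j1,k1)" "k1 \<in> arrowsS s r \<beta>" "1 \<le> i1" "i1 \<le> m (t k1)" "1 \<le> j1" "j1 \<le> m \<beta>"
    using assms(1) unfolding LS_iff by blast
  have "off (arrowsS s r \<beta>) (\<lambda>k. m (t k)) k1 + i1 = off (arrowsS s r \<beta>) (\<lambda>k. m (t k)) k + i"
    using assms(5) X unfolding posS_def rowOff_off arrK_def by simp
  from off_inj[OF fin_arrowsS X(2) assms(2) X(3) _ assms(3) _ this] X assms
  show ?thesis unfolding posS_def arrK_def by auto
qed

end

context
  fixes s t :: "nat \<Rightarrow> 'v" and r :: nat and m :: "'v \<Rightarrow> nat"
    and \<alpha> :: 'v and i c0 c1 :: nat and E :: "pos set"
  assumes g: "1 \<le> i" "i+1 \<le> rowsT s t r m \<alpha>" "1 \<le> c0" "c0 < c1" "c1 \<le> colsT s t r m \<alpha>"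
begin

abbreviation "pt \<equiv> phiT s t r m \<alpha>"

lemma G1_T:
  assumes B: "pt (i+1,c0) \<in> E" and T: "pt (i,c1) \<in> E"
    and bot: "\<forall>c. c0 < c \<longrightarrow> c < c1 \<longrightarrow> pt (i+1,c) \<notin> E"
    and ch: "has_diag_chain (DT s t r m \<alpha>' ((E \<union> {pt (i,c0)}) - {pt (i+1,c1)})) n"
  shows "has_diag_chain (DT s t r m \<alpha>' E) n"
proof (cases "\<alpha>' = \<alpha>")
  case False
  have gg: "(i,c0) \<in> gridT s t r m \<alpha>" using g unfolding gridT_iff by auto
  have "pt (i,c0) \<in> LT s t r m \<alpha>" using phiT_in[OF gg] by (rule conjunct1)
  hence "t (arrK (pt (i,c0))) = \<alpha>" unfolding LT_def by simp
  moreover have "t (arrK (phiT s t r m \<alpha>' x)) = \<alpha>'" if "x \<in> gridT s t r m \<alpha>'" for x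
    using phiT_in[OF that] unfolding LT_def by simp
  ultimately have ne: "phiT s t r m \<alpha>' x \<noteq> pt (i,c0)" if "x \<in> gridT s t r m \<alpha>'" for x
    using False that by metis
  have "DT s t r m \<alpha>' ((E \<union> {pt (i,c0)}) - {pt (i+1,c1)}) \<subseteq> DT s t r m \<alpha>' E"
    using ne unfolding DT_def by auto
  thus ?thesis using chain_mono ch by blast
next
  case True
  have gr: "(i,c0) \<in> gridT s t r m \<alpha>" "(i+1,c0) \<in> gridT s t r m \<alpha>" "(i,c1) \<in> gridT s t r m \<alpha>"
      "(i+1,c1) \<in> gridT s t r m \<alpha>" using g unfolding gridT_iff by auto
  define S where "S = {x \<in> gridT s t r m \<alpha>. pt x \<in> E \<and> pt x \<noteq> pt (i+1,c1)}"
  have sub: "DT s t r m \<alpha> ((E \<union> {pt (i,c0)}) - {pt (i+1,c1)}) \<subseteq> insert (i,c0) S"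
    unfolding DT_def S_def using phiT_inj[OF _ gr(1)] by auto
  have sub2: "S \<subseteq> DT s t r m \<alpha> E" unfolding S_def DT_def by auto
  have c1: "(i+1,c0) \<in> DT s t r m \<alpha> E" "(i,c1) \<in> DT s t r m \<alpha> E" unfolding DT_def using gr B T by auto
  have F: "\<forall>x\<in>S. fst x = i+1 \<longrightarrow> c0 < snd x \<longrightarrow> c1 < snd x"
  proof (intro ballI impI)
    fix x assume x: "x \<in> S" "fst x = i+1" "c0 < snd x"
    show "c1 < snd x"
    proof (rule ccontr)
      assume "\<not> c1 < snd x"
      hence "snd x < c1 \<or> snd x = c1" by auto
      thus False
      proof
        assume "snd x < c1" thus False using bot x unfolding S_def by (cases x) auto
      next
        assume "snd x = c1" thus False using x unfolding S_def by (cases x) auto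
      qed
    qed
  qed
  show ?thesis unfolding True
    by (rule chain_replace[OF ch[unfolded True] sub sub2 c1 AR1[OF g(4) F]])
qed

lemma G1_S:
  assumes B: "pt (i+1,c0) \<in> E" and T: "pt (i,c1) \<in> E"
    and bot: "\<forall>c. c0 < c \<longrightarrow> c < c1 \<longrightarrow> pt (i+1,c) \<notin> E"
    and ch: "has_diag_chain (DS s t r m \<beta> ((E \<union> {pt (i,c0)}) - {pt (i+1,c1)})) n"
  shows "has_diag_chain (DS s t r m \<beta> E) n"
proof -
  obtain aP bQ kP kQ where H: "pt (i,c0) = (i,aP,kP)" "pt (i+1,c0) = (i+1,aP,kP)"
     "pt (i,c1) = (i,bQ,kQ)" "pt (i+1,c1) = (i+1,bQ,kQ)"
     "(i,aP,kP) \<in> LT s t r m \<alpha>" "(i+1,aP,kP) \<in> LT s t r m \<alpha>" "(i,bQ,kQ) \<in> LT s t r m \<alpha>" "(i+1,bQ,kQ) \<in> LT s t r m \<alpha>"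
     "colOff s t r m \<alpha> kP + aP = c0" "colOff s t r m \<alpha> kQ + bQ = c1"
     "kP \<in> arrowsT t r \<alpha>" "kQ \<in> arrowsT t r \<alpha>" "1 \<le> aP" "aP \<le> m (s kP)" "1 \<le> bQ" "bQ \<le> m (s kQ)"
     "kP \<le> kQ" "kP = kQ \<longrightarrow> aP < bQ"
    using hconf[OF g] by blast
  show ?thesis
  proof (cases "\<beta> = s kP")
    case False
    have "phiS s t r m \<beta> x \<noteq> (i,aP,kP)" if "x \<in> gridS s t r m \<beta>" for x
      using phiS_in[OF that] False unfolding LS_def arrK_def by auto
    hence "DS s t r m \<beta> ((E \<union> {pt (i,c0)}) - {pt (i+1,c1)}) \<subseteq> DS s t r m \<beta> E"
      using H(1) unfolding DS_def by auto
    thus ?thesis using chain_mono ch by blast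
  next
    case True
    define R where "R = rowOff s t r m \<beta> kP"
    have LSi: "X \<in> LS s t r m \<beta>" if "X \<in> LT s t r m \<alpha>" "arrK X = kP" for X
      using that True unfolding LS_def LT_def by auto
    have PS: "(i,aP,kP) \<in> LS s t r m \<beta>" "(i+1,aP,kP) \<in> LS s t r m \<beta>" using LSi H by (auto simp: arrK_def)
    have posP: "posS s t r m \<beta> (i,aP,kP) = (R+i, aP)" "posS s t r m \<beta> (i+1,aP,kP) = (R+i+1, aP)"
      unfolding posS_def R_def arrK_def by auto
    define S where "S = {x \<in> gridS s t r m \<beta>. phiS s t r m \<beta> x \<in> E \<and> phiS s t r m \<beta> x \<noteq> (i+1,bQ,kQ)}"
    have sub: "DS s t r m \<beta> ((E \<union> {pt (i,c0)}) - {pt (i+1,c1)}) \<subseteq> insert (R+i,aP) S"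
    proof
      fix x assume x: "x \<in> DS s t r m \<beta> ((E \<union> {pt (i,c0)}) - {pt (i+1,c1)})"
      show "x \<in> insert (R+i,aP) S"
      proof (cases "phiS s t r m \<beta> x = (i,aP,kP)")
        case True
        moreover have "x \<in> gridS s t r m \<beta>" using x unfolding DS_def by auto
        ultimately have "x = posS s t r m \<beta> (i,aP,kP)" using phiS_in by metis
        thus ?thesis using posP by simp
      next
        case False thus ?thesis using x H unfolding DS_def S_def by auto
      qed
    qed
    have sub2: "S \<subseteq> DS s t r m \<beta> E" unfolding S_def DS_def by auto
    have cB: "(R+i+1,aP) \<in> DS s t r m \<beta> E"
      using posS_grid[OF PS(2)] phiS_eq[OF PS(2)] B H posP unfolding DS_def by auto
    have kPS: "kP \<in> arrowsS s r \<beta>" using H(11) True unfolding arrowsT_def arrowsS_def by auto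
    have im: "i+1 \<le> m (t kP)" using g H(11) unfolding rowsT_def arrowsT_def by auto
    have F: "\<forall>x\<in>S. fst x = R+i+1 \<longrightarrow> aP < snd x \<longrightarrow> kQ = kP \<and> bQ < snd x"
    proof (intro ballI impI)
      fix x assume x: "x \<in> S" "fst x = R+i+1" "aP < snd x"
      have xg: "x \<in> gridS s t r m \<beta>" and xE: "phiS s t r m \<beta> x \<in> E" and xQ: "phiS s t r m \<beta> x \<noteq> (i+1,bQ,kQ)"
        using x unfolding S_def by auto
      define X where "X = phiS s t r m \<beta> x"
      have XL: "X \<in> LS s t r m \<beta>" "posS s t r m \<beta> X = x" using phiS_in[OF xg] X_def by auto
      have X3: "X = (i+1, snd x, kP)"
        using decodeS[OF XL(1) kPS _ im] XL(2) x(2) R_def by auto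
      have XT: "X \<in> LT s t r m \<alpha>" using XL(1) X3 H(11) unfolding LS_def LT_def arrowsT_def arrK_def by auto
      have pX: "posT s t r m \<alpha> X = (i+1, colOff s t r m \<alpha> kP + snd x)" unfolding X3 posT_def arrK_def by simp
      have ptX: "pt (i+1, colOff s t r m \<alpha> kP + snd x) = X" using phiT_eq[OF XT] pX by simp
      have gc0: "colOff s t r m \<alpha> kP + snd x > c0" using H(9) x(3) by simp
      moreover have "\<not> colOff s t r m \<alpha> kP + snd x < c1" using bot ptX xE X_def gc0 by auto
      moreover have "colOff s t r m \<alpha> kP + snd x \<noteq> c1" using ptX H(4) xQ X_def by auto
      ultimately have gt: "off (arrowsT t r \<alpha>) (\<lambda>k. m (s k)) kQ + bQ < off (arrowsT t r \<alpha>) (\<lambda>k. m (s k)) kP + snd x"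
        using H(10) unfolding colOff_off by simp
      have "snd x \<le> m (s kP)" using XT X3 unfolding LT_iff by auto
      hence "kQ \<le> kP" using off_order[OF fin_arrowsT H(12) H(11) H(16) _ H(15) gt] by simp
      hence "kQ = kP" using H(17) by simp
      thus "kQ = kP \<and> bQ < snd x" using gt by simp
    qed
    show ?thesis
    proof (cases "kQ = kP")
      case True
      have TS: "(i,bQ,kQ) \<in> LS s t r m \<beta>" using LSi H True by (auto simp: arrK_def)
      have posT': "posS s t r m \<beta> (i,bQ,kQ) = (R+i, bQ)" unfolding posS_def R_def arrK_def True by auto
      have cT: "(R+i,bQ) \<in> DS s t r m \<beta> E"
        using posS_grid[OF TS] phiS_eq[OF TS] T H posT' unfolding DS_def by auto
      have F': "\<forall>x\<in>S. fst x = R+i+1 \<longrightarrow> aP < snd x \<longrightarrow> bQ < snd x" using F by blast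
      show ?thesis using chain_replace[OF ch sub sub2 cB cT AR1[OF _ F']] H(18) True by auto
    next
      case False
      have F': "\<forall>x\<in>S. fst x = R+i+1 \<longrightarrow> aP < snd x \<longrightarrow> False" using F False by blast
      show ?thesis using chain_replace[OF ch sub sub2 cB cB AR1'[OF F']] by auto
    qed
  qed
qed


lemma G3_T:
  assumes B: "pt (i+1,c0) \<in> E" and T: "pt (i,c1) \<in> E"
    and top: "\<forall>c. c0 < c \<longrightarrow> c < c1 \<longrightarrow> pt (i,c) \<notin> E"
    and ch: "has_diag_chain (DT s t r m \<alpha>' ((E - {pt (i,c0)}) \<union> {pt (i+1,c1)})) n"
  shows "has_diag_chain (DT s t r m \<alpha>' E) n"
proof (cases "\<alpha>' = \<alpha>")
  case False
  have gg: "(i+1,c1) \<in> gridT s t r m \<alpha>" using g unfolding gridT_iff by auto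
  have "pt (i+1,c1) \<in> LT s t r m \<alpha>" using phiT_in[OF gg] by (rule conjunct1)
  hence "t (arrK (pt (i+1,c1))) = \<alpha>" unfolding LT_def by simp
  moreover have "t (arrK (phiT s t r m \<alpha>' x)) = \<alpha>'" if "x \<in> gridT s t r m \<alpha>'" for x
    using phiT_in[OF that] unfolding LT_def by simp
  ultimately have ne: "phiT s t r m \<alpha>' x \<noteq> pt (i+1,c1)" if "x \<in> gridT s t r m \<alpha>'" for x
    using False that by metis
  have "DT s t r m \<alpha>' ((E - {pt (i,c0)}) \<union> {pt (i+1,c1)}) \<subseteq> DT s t r m \<alpha>' E"
    using ne unfolding DT_def by auto
  thus ?thesis using chain_mono ch by blast
next
  case True
  have gr: "(i,c0) \<in> gridT s t r m \<alpha>" "(i+1,c0) \<in> gridT s t r m \<alpha>" "(i,c1) \<in> gridT s t r m \<alpha>"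
      "(i+1,c1) \<in> gridT s t r m \<alpha>" using g unfolding gridT_iff by auto
  define S where "S = {x \<in> gridT s t r m \<alpha>. pt x \<in> E \<and> pt x \<noteq> pt (i,c0)}"
  have sub: "DT s t r m \<alpha> ((E - {pt (i,c0)}) \<union> {pt (i+1,c1)}) \<subseteq> insert (i+1,c1) S"
    unfolding DT_def S_def using phiT_inj[OF _ gr(4)] by auto
  have sub2: "S \<subseteq> DT s t r m \<alpha> E" unfolding S_def DT_def by auto
  have c1: "(i+1,c0) \<in> DT s t r m \<alpha> E" "(i,c1) \<in> DT s t r m \<alpha> E" unfolding DT_def using gr B T by auto
  have F: "\<forall>x\<in>S. fst x = i \<longrightarrow> snd x < c1 \<longrightarrow> snd x < c0"
  proof (intro ballI impI)
    fix x assume x: "x \<in> S" "fst x = i" "snd x < c1"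
    show "snd x < c0"
    proof (rule ccontr)
      assume "\<not> snd x < c0"
      hence "c0 < snd x \<or> snd x = c0" by auto
      thus False
      proof
        assume "c0 < snd x" thus False using top x unfolding S_def by (cases x) auto
      next
        assume "snd x = c0" thus False using x unfolding S_def by (cases x) auto
      qed
    qed
  qed
  show ?thesis unfolding True
    by (rule chain_replace[OF ch[unfolded True] sub sub2 c1(2) c1(1) AR3[OF g(4) F]])
qed

lemma G3_S:
  assumes B: "pt (i+1,c0) \<in> E" and T: "pt (i,c1) \<in> E"
    and top: "\<forall>c. c0 < c \<longrightarrow> c < c1 \<longrightarrow> pt (i,c) \<notin> E"
    and ch: "has_diag_chain (DS s t r m \<beta> ((E - {pt (i,c0)}) \<union> {pt (i+1,c1)})) n"
  shows "has_diag_chain (DS s t r m \<beta> E) n"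
proof -
  obtain aP bQ kP kQ where H: "pt (i,c0) = (i,aP,kP)" "pt (i+1,c0) = (i+1,aP,kP)"
     "pt (i,c1) = (i,bQ,kQ)" "pt (i+1,c1) = (i+1,bQ,kQ)"
     "(i,aP,kP) \<in> LT s t r m \<alpha>" "(i+1,aP,kP) \<in> LT s t r m \<alpha>" "(i,bQ,kQ) \<in> LT s t r m \<alpha>" "(i+1,bQ,kQ) \<in> LT s t r m \<alpha>"
     "colOff s t r m \<alpha> kP + aP = c0" "colOff s t r m \<alpha> kQ + bQ = c1"
     "kP \<in> arrowsT t r \<alpha>" "kQ \<in> arrowsT t r \<alpha>" "1 \<le> aP" "aP \<le> m (s kP)" "1 \<le> bQ" "bQ \<le> m (s kQ)"
     "kP \<le> kQ" "kP = kQ \<longrightarrow> aP < bQ"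
    using hconf[OF g] by blast
  show ?thesis
  proof (cases "\<beta> = s kQ")
    case False
    have "phiS s t r m \<beta> x \<noteq> (i+1,bQ,kQ)" if "x \<in> gridS s t r m \<beta>" for x
      using phiS_in[OF that] False unfolding LS_def arrK_def by auto
    hence "DS s t r m \<beta> ((E - {pt (i,c0)}) \<union> {pt (i+1,c1)}) \<subseteq> DS s t r m \<beta> E"
      using H(4) unfolding DS_def by auto
    thus ?thesis using chain_mono ch by blast
  next
    case True
    define R where "R = rowOff s t r m \<beta> kQ"
    have LSi: "X \<in> LS s t r m \<beta>" if "X \<in> LT s t r m \<alpha>" "arrK X = kQ" for X
      using that True unfolding LS_def LT_def by auto
    have QS: "(i,bQ,kQ) \<in> LS s t r m \<beta>" "(i+1,bQ,kQ) \<in> LS s t r m \<beta>" using LSi H by (auto simp: arrK_def)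
    have posQ: "posS s t r m \<beta> (i,bQ,kQ) = (R+i, bQ)" "posS s t r m \<beta> (i+1,bQ,kQ) = (R+i+1, bQ)"
      unfolding posS_def R_def arrK_def by auto
    define S where "S = {x \<in> gridS s t r m \<beta>. phiS s t r m \<beta> x \<in> E \<and> phiS s t r m \<beta> x \<noteq> (i,aP,kP)}"
    have sub: "DS s t r m \<beta> ((E - {pt (i,c0)}) \<union> {pt (i+1,c1)}) \<subseteq> insert (R+i+1,bQ) S"
    proof
      fix x assume x: "x \<in> DS s t r m \<beta> ((E - {pt (i,c0)}) \<union> {pt (i+1,c1)})"
      show "x \<in> insert (R+i+1,bQ) S"
      proof (cases "phiS s t r m \<beta> x = (i+1,bQ,kQ)")
        case True
        moreover have "x \<in> gridS s t r m \<beta>" using x unfolding DS_def by auto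
        ultimately have "x = posS s t r m \<beta> (i+1,bQ,kQ)" using phiS_in by metis
        thus ?thesis using posQ by simp
      next
        case False thus ?thesis using x H unfolding DS_def S_def by auto
      qed
    qed
    have sub2: "S \<subseteq> DS s t r m \<beta> E" unfolding S_def DS_def by auto
    have cT: "(R+i,bQ) \<in> DS s t r m \<beta> E"
      using posS_grid[OF QS(1)] phiS_eq[OF QS(1)] T H posQ unfolding DS_def by auto
    have kQS: "kQ \<in> arrowsS s r \<beta>" using H(12) True unfolding arrowsT_def arrowsS_def by auto
    have im: "i \<le> m (t kQ)" "1 \<le> i" using g H(12) unfolding rowsT_def arrowsT_def by auto
    have F: "\<forall>x\<in>S. fst x = R+i \<longrightarrow> snd x < bQ \<longrightarrow> kP = kQ \<and> snd x < aP"
    proof (intro ballI impI)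
      fix x assume x: "x \<in> S" "fst x = R+i" "snd x < bQ"
      have xg: "x \<in> gridS s t r m \<beta>" and xE: "phiS s t r m \<beta> x \<in> E" and xP: "phiS s t r m \<beta> x \<noteq> (i,aP,kP)"
        using x unfolding S_def by auto
      define X where "X = phiS s t r m \<beta> x"
      have XL: "X \<in> LS s t r m \<beta>" "posS s t r m \<beta> X = x" using phiS_in[OF xg] X_def by auto
      have X3: "X = (i, snd x, kQ)"
        using decodeS[OF XL(1) kQS im(2) im(1)] XL(2) x(2) R_def by auto
      have XT: "X \<in> LT s t r m \<alpha>" using XL(1) X3 H(12) unfolding LS_def LT_def arrowsT_def arrK_def by auto
      have pX: "posT s t r m \<alpha> X = (i, colOff s t r m \<alpha> kQ + snd x)" unfolding X3 posT_def arrK_def by simp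
      have ptX: "pt (i, colOff s t r m \<alpha> kQ + snd x) = X" using phiT_eq[OF XT] pX by simp
      have gc1: "colOff s t r m \<alpha> kQ + snd x < c1" using H(10) x(3) by simp
      moreover have "\<not> c0 < colOff s t r m \<alpha> kQ + snd x" using top ptX xE X_def gc1 by auto
      moreover have "colOff s t r m \<alpha> kQ + snd x \<noteq> c0" using ptX H(1) xP X_def by auto
      ultimately have lt: "off (arrowsT t r \<alpha>) (\<lambda>k. m (s k)) kQ + snd x < off (arrowsT t r \<alpha>) (\<lambda>k. m (s k)) kP + aP"
        using H(9) unfolding colOff_off by simp
      have "snd x \<le> m (s kQ)" "1 \<le> snd x" using XT X3 unfolding LT_iff by auto
      hence "kQ \<le> kP" using off_order[OF fin_arrowsT H(12) H(11) _ H(14) _ lt] by simp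
      hence "kP = kQ" using H(17) by simp
      thus "kP = kQ \<and> snd x < aP" using lt by simp
    qed
    show ?thesis
    proof (cases "kP = kQ")
      case True
      have BS: "(i+1,aP,kP) \<in> LS s t r m \<beta>" using LSi H True by (auto simp: arrK_def)
      have posB: "posS s t r m \<beta> (i+1,aP,kP) = (R+i+1, aP)" unfolding posS_def R_def arrK_def True by auto
      have cB: "(R+i+1,aP) \<in> DS s t r m \<beta> E"
        using posS_grid[OF BS] phiS_eq[OF BS] B H posB unfolding DS_def by auto
      have F': "\<forall>x\<in>S. fst x = R+i \<longrightarrow> snd x < bQ \<longrightarrow> snd x < aP" using F by blast
      show ?thesis using chain_replace[OF ch sub sub2 cT cB AR3[OF _ F']] H(18) True by auto
    next
      case False
      have F': "\<forall>x\<in>S. fst x = R+i \<longrightarrow> snd x < bQ \<longrightarrow> False" using F False by blast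
      show ?thesis using chain_replace[OF ch sub sub2 cT cT AR3'[OF F']] by auto
    qed
  qed
qed


lemma pt_L: "c \<le> colsT s t r m \<alpha> \<Longrightarrow> 1 \<le> c \<Longrightarrow> i' \<le> rowsT s t r m \<alpha> \<Longrightarrow> 1 \<le> i' \<Longrightarrow> pt (i',c) \<in> Lset s t r m"
proof -
  assume "c \<le> colsT s t r m \<alpha>" "1 \<le> c" "i' \<le> rowsT s t r m \<alpha>" "1 \<le> i'"
  hence gg: "(i',c) \<in> gridT s t r m \<alpha>" unfolding gridT_iff by auto
  show ?thesis using phiT_in[OF gg] unfolding LT_def by auto
qed

lemma G1c:
  assumes comp: "u_compatible Vs Vt s t r m u E"
    and B: "pt (i+1,c0) \<in> E" and T: "pt (i,c1) \<in> E"
    and bot: "\<forall>c. c0 < c \<longrightarrow> c < c1 \<longrightarrow> pt (i+1,c) \<notin> E"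
  shows "u_compatible Vs Vt s t r m u ((E \<union> {pt (i,c0)}) - {pt (i+1,c1)})"
proof -
  have "pt (i,c0) \<in> Lset s t r m" using pt_L g by auto
  thus ?thesis using comp G1_T[OF B T bot] G1_S[OF B T bot] unfolding u_compatible_def by blast
qed

lemma G3c:
  assumes comp: "u_compatible Vs Vt s t r m u E"
    and B: "pt (i+1,c0) \<in> E" and T: "pt (i,c1) \<in> E"
    and top: "\<forall>c. c0 < c \<longrightarrow> c < c1 \<longrightarrow> pt (i,c) \<notin> E"
  shows "u_compatible Vs Vt s t r m u ((E - {pt (i,c0)}) \<union> {pt (i+1,c1)})"
proof -
  have "pt (i+1,c1) \<in> Lset s t r m" using pt_L g by auto
  thus ?thesis using comp G3_T[OF B T top] G3_S[OF B T top] unfolding u_compatible_def by blast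
qed

end


lemma compat_mono:
  assumes "u_compatible Vs Vt s t r m u E" "E' \<subseteq> E"
  shows "u_compatible Vs Vt s t r m u E'"
proof -
  have "DT s t r m \<alpha> E' \<subseteq> DT s t r m \<alpha> E" for \<alpha> using assms(2) unfolding DT_def by auto
  moreover have "DS s t r m \<beta> E' \<subseteq> DS s t r m \<beta> E" for \<beta> using assms(2) unfolding DS_def by auto
  ultimately show ?thesis using assms unfolding u_compatible_def by (meson chain_mono subset_trans)
qed

lemma hchute_unf:
  assumes "hchute Vt s t r m D D'"
  shows "\<exists>\<alpha> i c0 c1. \<alpha> \<in> Vt \<and> 1 \<le> i \<and> i+1 \<le> rowsT s t r m \<alpha> \<and> 1 \<le> c0 \<and> c0 < c1 \<and> c1 \<le> colsT s t r m \<alpha> \<and>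
    phiT s t r m \<alpha> (i+1,c0) \<in> D \<and> phiT s t r m \<alpha> (i,c1) \<in> D \<and> phiT s t r m \<alpha> (i+1,c1) \<in> D \<and>
    phiT s t r m \<alpha> (i,c0) \<notin> D \<and>
    (\<forall>c. c0 < c \<longrightarrow> c < c1 \<longrightarrow> phiT s t r m \<alpha> (i,c) \<notin> D \<and> phiT s t r m \<alpha> (i+1,c) \<notin> D) \<and>
    D' = (D \<union> {phiT s t r m \<alpha> (i,c0)}) - {phiT s t r m \<alpha> (i+1,c1)}"
proof -
  obtain \<alpha> i j l where A: "\<alpha> \<in> Vt" "2 \<le> l" "1 \<le> i" "i + 1 \<le> rowsT s t r m \<alpha>" "1 \<le> j"
    "j + l - 1 \<le> colsT s t r m \<alpha>"
    "DT s t r m \<alpha> D \<inter> ({i..i+1} \<times> {j..j+l-1}) = {(i+1, j), (i, j+l-1), (i+1, j+l-1)}"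
    "D' = (D \<union> {phiT s t r m \<alpha> (i, j)}) - {phiT s t r m \<alpha> (i+1, j+l-1)}"
    using assms unfolding hchute_def by blast
  define c1 where "c1 = j + l - 1"
  have A7: "DT s t r m \<alpha> D \<inter> ({i..i+1} \<times> {j..c1}) = {(i+1, j), (i, c1), (i+1, c1)}"
    using A(7) unfolding c1_def .
  have key: "phiT s t r m \<alpha> (p,q) \<in> D \<longleftrightarrow> (p,q) \<in> {(i+1, j), (i, c1), (i+1, c1)}"
    if pq: "p \<in> {i..i+1}" "q \<in> {j..c1}" for p q
  proof -
    have "(p,q) \<in> gridT s t r m \<alpha>" using pq A unfolding gridT_iff c1_def by auto
    hence 1: "(p,q) \<in> DT s t r m \<alpha> D \<longleftrightarrow> phiT s t r m \<alpha> (p,q) \<in> D" unfolding DT_def by blast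
    have 2: "(p,q) \<in> DT s t r m \<alpha> D \<inter> ({i..i+1} \<times> {j..c1}) \<longleftrightarrow> (p,q) \<in> DT s t r m \<alpha> D"
      using pq by blast
    have 3: "(p,q) \<in> DT s t r m \<alpha> D \<inter> ({i..i+1} \<times> {j..c1}) \<longleftrightarrow> (p,q) \<in> {(i+1, j), (i, c1), (i+1, c1)}"
      by (simp only: A7)
    show ?thesis using 1 2 3 by blast
  qed
  have jc: "j < c1" using A(2) c1_def by simp
  show ?thesis
  proof (intro exI conjI)
    show "\<alpha> \<in> Vt" "1 \<le> i" "i+1 \<le> rowsT s t r m \<alpha>" "1 \<le> j" "j < c1" "c1 \<le> colsT s t r m \<alpha>"
      using A jc c1_def by auto
    show "phiT s t r m \<alpha> (i+1,j) \<in> D" "phiT s t r m \<alpha> (i,c1) \<in> D" "phiT s t r m \<alpha> (i+1,c1) \<in> D"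
      "phiT s t r m \<alpha> (i,j) \<notin> D"
      using key[of "i+1" j] key[of i c1] key[of "i+1" c1] key[of i j] jc by auto
    show "\<forall>c. j < c \<longrightarrow> c < c1 \<longrightarrow> phiT s t r m \<alpha> (i,c) \<notin> D \<and> phiT s t r m \<alpha> (i+1,c) \<notin> D"
    proof (intro allI impI)
      fix c assume "j < c" "c < c1"
      thus "phiT s t r m \<alpha> (i,c) \<notin> D \<and> phiT s t r m \<alpha> (i+1,c) \<notin> D"
        using key[of i c] key[of "i+1" c] by auto
    qed
    show "D' = (D \<union> {phiT s t r m \<alpha> (i,j)}) - {phiT s t r m \<alpha> (i+1,c1)}" using A(8) c1_def by simp
  qed
qed


lemma H1:
  assumes "u_compatible Vs Vt s t r m u D" "hchute Vt s t r m D D'"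
  shows "u_compatible Vs Vt s t r m u D'"
proof -
  obtain \<alpha> i c0 c1 where A: "\<alpha> \<in> Vt" "1 \<le> i" "i+1 \<le> rowsT s t r m \<alpha>" "1 \<le> c0" "c0 < c1" "c1 \<le> colsT s t r m \<alpha>"
    "phiT s t r m \<alpha> (i+1,c0) \<in> D" "phiT s t r m \<alpha> (i,c1) \<in> D"
    "\<forall>c. c0 < c \<longrightarrow> c < c1 \<longrightarrow> phiT s t r m \<alpha> (i,c) \<notin> D \<and> phiT s t r m \<alpha> (i+1,c) \<notin> D"
    "D' = (D \<union> {phiT s t r m \<alpha> (i,c0)}) - {phiT s t r m \<alpha> (i+1,c1)}"
    using hchute_unf[OF assms(2)] by blast
  have bot: "\<forall>c. c0 < c \<longrightarrow> c < c1 \<longrightarrow> phiT s t r m \<alpha> (i+1,c) \<notin> D" using A(9) by blast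
  show ?thesis unfolding A(10) by (rule G1c[OF A(2-6) assms(1) A(7,8) bot])
qed

lemma H3:
  assumes "u_compatible Vs Vt s t r m u D" "hchute Vt s t r m D' D"
  shows "u_compatible Vs Vt s t r m u D'"
proof -
  obtain \<alpha> i c0 c1 where A: "\<alpha> \<in> Vt" "1 \<le> i" "i+1 \<le> rowsT s t r m \<alpha>" "1 \<le> c0" "c0 < c1" "c1 \<le> colsT s t r m \<alpha>"
    "phiT s t r m \<alpha> (i+1,c0) \<in> D'" "phiT s t r m \<alpha> (i,c1) \<in> D'" "phiT s t r m \<alpha> (i+1,c1) \<in> D'"
    "phiT s t r m \<alpha> (i,c0) \<notin> D'"
    "\<forall>c. c0 < c \<longrightarrow> c < c1 \<longrightarrow> phiT s t r m \<alpha> (i,c) \<notin> D' \<and> phiT s t r m \<alpha> (i+1,c) \<notin> D'"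
    "D = (D' \<union> {phiT s t r m \<alpha> (i,c0)}) - {phiT s t r m \<alpha> (i+1,c1)}"
    using hchute_unf[OF assms(2)] by blast
  have gr: "(p,q) \<in> gridT s t r m \<alpha>" if "p = i \<or> p = i+1" "c0 \<le> q" "q \<le> c1" for p q
    using that A unfolding gridT_iff by auto
  have inj: "phiT s t r m \<alpha> (p,q) \<noteq> phiT s t r m \<alpha> (p',q')"
    if "p = i \<or> p = i+1" "c0 \<le> q" "q \<le> c1" "p' = i \<or> p' = i+1" "c0 \<le> q'" "q' \<le> c1" "(p,q) \<noteq> (p',q')" for p q p' q'
    using phiT_inj[OF gr[OF that(1-3)] gr[OF that(4-6)]] that(7) by blast
  have PQ: "phiT s t r m \<alpha> (i,c0) \<noteq> phiT s t r m \<alpha> (i+1,c1)" using inj A(5) by simp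
  have D': "D' = (D - {phiT s t r m \<alpha> (i,c0)}) \<union> {phiT s t r m \<alpha> (i+1,c1)}"
    using A(9,10,12) PQ by blast
  have B: "phiT s t r m \<alpha> (i+1,c0) \<in> D"
    using A(7,12) inj[of "i+1" c0 "i+1" c1] A(5) by auto
  have T: "phiT s t r m \<alpha> (i,c1) \<in> D" using A(8,12) inj[of i c1 "i+1" c1] A(5) by auto
  have top: "\<forall>c. c0 < c \<longrightarrow> c < c1 \<longrightarrow> phiT s t r m \<alpha> (i,c) \<notin> D"
  proof (intro allI impI)
    fix c assume "c0 < c" "c < c1"
    thus "phiT s t r m \<alpha> (i,c) \<notin> D" using A(11,12) inj[of i c i c0] by auto
  qed
  show ?thesis unfolding D' by (rule G3c[OF A(2-6) assms(1) B T top])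
qed


lemma H2:
  assumes cvm: "concurrent_vertex_map Vs Vt s t r m u C" and hc: "hchute Vt s t r m C C'"
  shows "concurrent_vertex_map Vs Vt s t r m u C'"
proof -
  obtain \<alpha> i c0 c1 where A: "\<alpha> \<in> Vt" "1 \<le> i" "i+1 \<le> rowsT s t r m \<alpha>" "1 \<le> c0" "c0 < c1" "c1 \<le> colsT s t r m \<alpha>"
    "phiT s t r m \<alpha> (i+1,c0) \<in> C" "phiT s t r m \<alpha> (i,c1) \<in> C" "phiT s t r m \<alpha> (i+1,c1) \<in> C"
    "phiT s t r m \<alpha> (i,c0) \<notin> C"
    "\<forall>c. c0 < c \<longrightarrow> c < c1 \<longrightarrow> phiT s t r m \<alpha> (i,c) \<notin> C \<and> phiT s t r m \<alpha> (i+1,c) \<notin> C"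
    "C' = (C \<union> {phiT s t r m \<alpha> (i,c0)}) - {phiT s t r m \<alpha> (i+1,c1)}"
    using hchute_unf[OF hc] by blast
  let ?pt = "phiT s t r m \<alpha>"
  have gr: "(p,q) \<in> gridT s t r m \<alpha>" if "p = i \<or> p = i+1" "c0 \<le> q" "q \<le> c1" for p q
    using that A unfolding gridT_iff by auto
  have inj: "?pt (p,q) \<noteq> ?pt (p',q')"
    if "p = i \<or> p = i+1" "c0 \<le> q" "q \<le> c1" "p' = i \<or> p' = i+1" "c0 \<le> q'" "q' \<le> c1" "(p,q) \<noteq> (p',q')" for p q p' q'
    using phiT_inj[OF gr[OF that(1-3)] gr[OF that(4-6)]] that(7) by blast
  have compC: "u_compatible Vs Vt s t r m u C" and maxC: "\<And>D. u_compatible Vs Vt s t r m u D \<Longrightarrow> C \<subseteq> D \<Longrightarrow> D = C"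
    using cvm unfolding concurrent_vertex_map_def by auto
  have compC': "u_compatible Vs Vt s t r m u C'" by (rule H1[OF compC hc])
  have PQ: "?pt (i,c0) \<noteq> ?pt (i+1,c1)" using inj A(5) by simp
  have BQ: "?pt (i+1,c0) \<noteq> ?pt (i+1,c1)" using inj A(5) by simp
  have TQ: "?pt (i,c1) \<noteq> ?pt (i+1,c1)" using inj A(5) by simp
  have PC': "?pt (i,c0) \<in> C'" using A(12) PQ by blast
  have BC': "?pt (i+1,c0) \<in> C'" using A(7,12) BQ by blast
  have TC': "?pt (i,c1) \<in> C'" using A(8,12) TQ by blast
  have notin: "\<not> u_compatible Vs Vt s t r m u (insert X C)" if "X \<notin> C" for X
  proof
    assume "u_compatible Vs Vt s t r m u (insert X C)"
    from maxC[OF this] that show False by blast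
  qed
  have max': "D = C'" if compD: "u_compatible Vs Vt s t r m u D" and sub: "C' \<subseteq> D" for D
  proof (rule ccontr)
    assume "D \<noteq> C'"
    then obtain X where X: "X \<in> D" "X \<notin> C'" using sub by blast
    define E where "E = insert X C'"
    have compE: "u_compatible Vs Vt s t r m u E" using compat_mono[OF compD] X sub unfolding E_def by blast
    have XP: "X \<noteq> ?pt (i,c0)" using X PC' by blast
    show False
    proof (cases "X = ?pt (i+1,c1)")
      case True
      have "E = insert (?pt (i,c0)) C" unfolding E_def True A(12) using A(9) by blast
      thus False using compE notin A(10) by simp
    next
      case XQ: False
      show False
      proof (cases "\<exists>c. c0 < c \<and> c < c1 \<and> X = ?pt (i,c)")
        case False
        have B: "?pt (i+1,c0) \<in> E" "?pt (i,c1) \<in> E" using BC' TC' unfolding E_def by auto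
        have top: "\<forall>c. c0 < c \<longrightarrow> c < c1 \<longrightarrow> ?pt (i,c) \<notin> E"
        proof (intro allI impI)
          fix c assume c: "c0 < c" "c < c1"
          have "?pt (i,c) \<noteq> ?pt (i,c0)" using inj[of i c i c0] c by simp
          thus "?pt (i,c) \<notin> E" using A(11,12) c False unfolding E_def by auto
        qed
        have "u_compatible Vs Vt s t r m u ((E - {?pt (i,c0)}) \<union> {?pt (i+1,c1)})"
          by (rule G3c[OF A(2-6) compE B top])
        moreover have "(E - {?pt (i,c0)}) \<union> {?pt (i+1,c1)} = insert X C"
          unfolding E_def A(12) using XP A(9,10) by blast
        moreover have "X \<notin> C" using X XQ A(12) by blast
        ultimately show False using notin by simp
      next
        case True
        then obtain c where c: "c0 < c" "c < c1" "X = ?pt (i,c)" by blast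
        have g1: "1 \<le> i" "i+1 \<le> rowsT s t r m \<alpha>" "1 \<le> c0" "c0 < c" "c \<le> colsT s t r m \<alpha>" using A c by auto
        have g2: "1 \<le> i" "i+1 \<le> rowsT s t r m \<alpha>" "1 \<le> c" "c < c1" "c1 \<le> colsT s t r m \<alpha>" using A c by auto
        have XC: "X \<notin> C" using A(11) c by blast
        have YC: "?pt (i+1,c) \<notin> C" using A(11) c by blast
        have B1: "?pt (i+1,c0) \<in> E" "?pt (i,c) \<in> E" using BC' c unfolding E_def by auto
        have top1: "\<forall>c'. c0 < c' \<longrightarrow> c' < c \<longrightarrow> ?pt (i,c') \<notin> E"
        proof (intro allI impI)
          fix c' assume c': "c0 < c'" "c' < c"
          have "?pt (i,c') \<noteq> ?pt (i,c0)" "?pt (i,c') \<noteq> ?pt (i,c)" using inj[of i c' i c0] inj[of i c' i c] c' c by auto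
          thus "?pt (i,c') \<notin> E" using A(11,12) c c' unfolding E_def by auto
        qed
        define F where "F = (E - {?pt (i,c0)}) \<union> {?pt (i+1,c)}"
        have compF: "u_compatible Vs Vt s t r m u F" unfolding F_def by (rule G3c[OF g1 compE B1 top1])
        have YX: "?pt (i+1,c) \<noteq> ?pt (i,c)" using inj[of "i+1" c i c] c by simp
        have TP: "?pt (i,c1) \<noteq> ?pt (i,c0)" using inj[of i c1 i c0] A(5) by simp
        have B2: "?pt (i+1,c) \<in> F" "?pt (i,c1) \<in> F" using TC' TP unfolding F_def E_def by auto
        have top2: "\<forall>c'. c < c' \<longrightarrow> c' < c1 \<longrightarrow> ?pt (i,c') \<notin> F"
        proof (intro allI impI)
          fix c' assume c': "c < c'" "c' < c1"
          have "?pt (i,c') \<noteq> ?pt (i,c0)" "?pt (i,c') \<noteq> ?pt (i,c)" "?pt (i,c') \<noteq> ?pt (i+1,c)"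
            using inj[of i c' i c0] inj[of i c' i c] inj[of i c' "i+1" c] c' c by auto
          thus "?pt (i,c') \<notin> F" using A(11,12) c c' unfolding F_def E_def by auto
        qed
        have "u_compatible Vs Vt s t r m u ((F - {?pt (i,c)}) \<union> {?pt (i+1,c1)})"
          by (rule G3c[OF g2 compF B2 top2])
        moreover have "(F - {?pt (i,c)}) \<union> {?pt (i+1,c1)} = insert (?pt (i+1,c)) C"
          unfolding F_def E_def A(12) using XC YX A(9,10) XP unfolding c(3) by auto
        ultimately show False using notin YC by simp
      qed
    qed
  qed
  show ?thesis unfolding concurrent_vertex_map_def using compC' max' by blast
qed


lemma H4:
  assumes cvm: "concurrent_vertex_map Vs Vt s t r m u C" and hc: "hchute Vt s t r m C' C"
  shows "concurrent_vertex_map Vs Vt s t r m u C'"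
proof -
  obtain \<alpha> i c0 c1 where A: "\<alpha> \<in> Vt" "1 \<le> i" "i+1 \<le> rowsT s t r m \<alpha>" "1 \<le> c0" "c0 < c1" "c1 \<le> colsT s t r m \<alpha>"
    "phiT s t r m \<alpha> (i+1,c0) \<in> C'" "phiT s t r m \<alpha> (i,c1) \<in> C'" "phiT s t r m \<alpha> (i+1,c1) \<in> C'"
    "phiT s t r m \<alpha> (i,c0) \<notin> C'"
    "\<forall>c. c0 < c \<longrightarrow> c < c1 \<longrightarrow> phiT s t r m \<alpha> (i,c) \<notin> C' \<and> phiT s t r m \<alpha> (i+1,c) \<notin> C'"
    "C = (C' \<union> {phiT s t r m \<alpha> (i,c0)}) - {phiT s t r m \<alpha> (i+1,c1)}"
    using hchute_unf[OF hc] by blast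
  let ?pt = "phiT s t r m \<alpha>"
  have gr: "(p,q) \<in> gridT s t r m \<alpha>" if "p = i \<or> p = i+1" "c0 \<le> q" "q \<le> c1" for p q
    using that A unfolding gridT_iff by auto
  have inj: "?pt (p,q) \<noteq> ?pt (p',q')"
    if "p = i \<or> p = i+1" "c0 \<le> q" "q \<le> c1" "p' = i \<or> p' = i+1" "c0 \<le> q'" "q' \<le> c1" "(p,q) \<noteq> (p',q')" for p q p' q'
    using phiT_inj[OF gr[OF that(1-3)] gr[OF that(4-6)]] that(7) by blast
  have compC: "u_compatible Vs Vt s t r m u C" and maxC: "\<And>D. u_compatible Vs Vt s t r m u D \<Longrightarrow> C \<subseteq> D \<Longrightarrow> D = C"
    using cvm unfolding concurrent_vertex_map_def by auto
  have compC': "u_compatible Vs Vt s t r m u C'" by (rule H3[OF compC hc])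
  have PQ: "?pt (i,c0) \<noteq> ?pt (i+1,c1)" using inj A(5) by simp
  have BQ: "?pt (i+1,c0) \<noteq> ?pt (i+1,c1)" using inj A(5) by simp
  have TQ: "?pt (i,c1) \<noteq> ?pt (i+1,c1)" using inj A(5) by simp
  have BP: "?pt (i+1,c0) \<noteq> ?pt (i,c0)" using inj A(5) by simp
  have TP: "?pt (i,c1) \<noteq> ?pt (i,c0)" using inj A(5) by simp
  have PC: "?pt (i,c0) \<in> C" using A(12) PQ by blast
  have QC: "?pt (i+1,c1) \<notin> C" using A(12) by blast
  have C'eq: "C' = (C - {?pt (i,c0)}) \<union> {?pt (i+1,c1)}" using A(9,10,12) PQ by blast
  have notin: "\<not> u_compatible Vs Vt s t r m u (insert X C)" if "X \<notin> C" for X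
  proof
    assume "u_compatible Vs Vt s t r m u (insert X C)"
    from maxC[OF this] that show False by blast
  qed
  have max': "D = C'" if compD: "u_compatible Vs Vt s t r m u D" and sub: "C' \<subseteq> D" for D
  proof (rule ccontr)
    assume "D \<noteq> C'"
    then obtain X where X: "X \<in> D" "X \<notin> C'" using sub by blast
    define E where "E = insert X C'"
    have compE: "u_compatible Vs Vt s t r m u E" using compat_mono[OF compD] X sub unfolding E_def by blast
    have XQ: "X \<noteq> ?pt (i+1,c1)" using X A(9) by blast
    show False
    proof (cases "X = ?pt (i,c0)")
      case True
      have "E = insert (?pt (i+1,c1)) C" unfolding E_def True C'eq using PC by blast
      thus False using compE notin QC by simp
    next
      case XP: False
      show False
      proof (cases "\<exists>c. c0 < c \<and> c < c1 \<and> X = ?pt (i+1,c)")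
        case False
        have B: "?pt (i+1,c0) \<in> E" "?pt (i,c1) \<in> E" using A(7,8) unfolding E_def by auto
        have bot: "\<forall>c. c0 < c \<longrightarrow> c < c1 \<longrightarrow> ?pt (i+1,c) \<notin> E"
          using A(11) False unfolding E_def by auto
        have "u_compatible Vs Vt s t r m u ((E \<union> {?pt (i,c0)}) - {?pt (i+1,c1)})"
          by (rule G1c[OF A(2-6) compE B bot])
        moreover have "(E \<union> {?pt (i,c0)}) - {?pt (i+1,c1)} = insert X C"
          unfolding E_def A(12) using XQ by blast
        moreover have "X \<notin> C" using X XP A(12) by blast
        ultimately show False using notin by simp
      next
        case True
        then obtain c where c: "c0 < c" "c < c1" "X = ?pt (i+1,c)" by blast
        have g1: "1 \<le> i" "i+1 \<le> rowsT s t r m \<alpha>" "1 \<le> c0" "c0 < c" "c \<le> colsT s t r m \<alpha>" using A c by auto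
        have g2: "1 \<le> i" "i+1 \<le> rowsT s t r m \<alpha>" "1 \<le> c" "c < c1" "c1 \<le> colsT s t r m \<alpha>" using A c by auto
        have XC: "X \<notin> C" using A(11,12) c XP by blast
        have ZC: "?pt (i,c) \<notin> C" using A(11,12) c inj[of i c i c0] by auto
        have B1: "?pt (i+1,c) \<in> E" "?pt (i,c1) \<in> E" using A(8) c unfolding E_def by auto
        have bot1: "\<forall>c'. c < c' \<longrightarrow> c' < c1 \<longrightarrow> ?pt (i+1,c') \<notin> E"
        proof (intro allI impI)
          fix c' assume c': "c < c'" "c' < c1"
          have "?pt (i+1,c') \<noteq> ?pt (i+1,c)" using inj[of "i+1" c' "i+1" c] c' c by auto
          thus "?pt (i+1,c') \<notin> E" using A(11) c c' unfolding E_def by auto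
        qed
        define F where "F = (E \<union> {?pt (i,c)}) - {?pt (i+1,c1)}"
        have compF: "u_compatible Vs Vt s t r m u F" unfolding F_def by (rule G1c[OF g2 compE B1 bot1])
        have ZX: "?pt (i,c) \<noteq> ?pt (i+1,c)" using inj[of i c "i+1" c] c by simp
        have ZQ: "?pt (i,c) \<noteq> ?pt (i+1,c1)" using inj[of i c "i+1" c1] c by simp
        have B2: "?pt (i+1,c0) \<in> F" "?pt (i,c) \<in> F" using A(7) BQ ZQ unfolding F_def E_def by auto
        have bot2: "\<forall>c'. c0 < c' \<longrightarrow> c' < c \<longrightarrow> ?pt (i+1,c') \<notin> F"
        proof (intro allI impI)
          fix c' assume c': "c0 < c'" "c' < c"
          have "?pt (i+1,c') \<noteq> ?pt (i+1,c)" "?pt (i+1,c') \<noteq> ?pt (i,c)"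
            using inj[of "i+1" c' "i+1" c] inj[of "i+1" c' i c] c' c by auto
          thus "?pt (i+1,c') \<notin> F" using A(11) c c' unfolding F_def E_def by auto
        qed
        have "u_compatible Vs Vt s t r m u ((F \<union> {?pt (i,c0)}) - {?pt (i+1,c)})"
          by (rule G1c[OF g1 compF B2 bot2])
        moreover have "(F \<union> {?pt (i,c0)}) - {?pt (i+1,c)} = insert (?pt (i,c)) C"
          unfolding F_def E_def using XC ZX ZQ XQ PC QC C'eq unfolding c(3) by auto
        ultimately show False using notin ZC by simp
      qed
    qed
  qed
  show ?thesis unfolding concurrent_vertex_map_def using compC' max' by blast
qed

lemma ltT_irrefl: "\<not> ltT x x"
  unfolding ltT_def by (cases x) auto
lemma ltT_trans: "ltT x y \<Longrightarrow> ltT y z \<Longrightarrow> ltT x z"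
  unfolding ltT_def by (cases x, cases y, cases z) auto
lemma ltT_total: "x \<noteq> y \<Longrightarrow> ltT x y \<or> ltT y x"
  unfolding ltT_def by (cases x, cases y) auto

lemma sorted_ltT_distinct: "sorted_wrt ltT xs \<Longrightarrow> distinct xs"
  by (induction xs) (auto simp: ltT_irrefl)

lemma sorted_ltT_unique: "sorted_wrt ltT xs \<Longrightarrow> sorted_wrt ltT ys \<Longrightarrow> set xs = set ys \<Longrightarrow> xs = ys"
proof (induction xs arbitrary: ys)
  case Nil thus ?case by simp
next
  case (Cons x xs)
  show ?case
  proof (cases ys)
    case Nil thus ?thesis using Cons.prems by simp
  next
    case (Cons y ys')
    note ys = this
    have sx: "\<forall>z\<in>set xs. ltT x z" "sorted_wrt ltT xs" using Cons.prems(1) by auto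
    have sy: "\<forall>z\<in>set ys'. ltT y z" "sorted_wrt ltT ys'" using Cons.prems(2) ys by auto
    have eq: "insert x (set xs) = insert y (set ys')" using Cons.prems(3) ys by simp
    have xy: "x = y"
    proof (rule ccontr)
      assume ne: "x \<noteq> y"
      have "y \<in> insert x (set xs)" using eq by simp
      hence "y \<in> set xs" using ne by simp
      moreover have "x \<in> insert y (set ys')" using eq[symmetric] by simp
      hence "x \<in> set ys'" using ne by simp
      ultimately have 1: "ltT x y" and 2: "ltT y x" using sx sy by auto
      show False using ltT_trans[OF 1 2] ltT_irrefl by simp
    qed
    have "x \<notin> set xs" using sx ltT_irrefl by blast
    moreover have "y \<notin> set ys'" using sy ltT_irrefl by blast
    ultimately have "set xs = set ys'" using eq xy by (metis Diff_insert_absorb)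
    hence "xs = ys'" using Cons.IH sx(2) sy(2) by blast
    thus ?thesis using ys xy by simp
  qed
qed

lemma ex_max_ltT: "finite C \<Longrightarrow> C \<noteq> {} \<Longrightarrow> \<exists>mx\<in>C. \<forall>y\<in>C. y \<noteq> mx \<longrightarrow> ltT y mx"
proof (induction C rule: finite_ne_induct)
  case (singleton x) thus ?case by auto
next
  case (insert x F)
  then obtain mx where mx: "mx \<in> F" "\<forall>y\<in>F. y \<noteq> mx \<longrightarrow> ltT y mx" by blast
  show ?case
  proof (cases "ltT mx x")
    case True
    have "\<forall>y\<in>insert x F. y \<noteq> x \<longrightarrow> ltT y x"
    proof (intro ballI impI)
      fix y assume "y \<in> insert x F" "y \<noteq> x"
      hence "y \<in> F" by simp
      show "ltT y x"
      proof (cases "y = mx")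
        case True thus ?thesis using \<open>ltT mx x\<close> by simp
      next
        case False thus ?thesis using mx(2) \<open>y \<in> F\<close> ltT_trans[OF _ \<open>ltT mx x\<close>] by blast
      qed
    qed
    thus ?thesis by blast
  next
    case False
    hence "x \<noteq> mx \<longrightarrow> ltT x mx" using ltT_total by blast
    thus ?thesis using mx by blast
  qed
qed

lemma ex_sorted: "finite C \<Longrightarrow> \<exists>xs. set xs = C \<and> sorted_wrt ltT xs"
proof (induction "card C" arbitrary: C)
  case 0 thus ?case by (intro exI[of _ "[]"]) auto
next
  case (Suc n)
  hence "C \<noteq> {}" by auto
  then obtain mx where mx: "mx \<in> C" "\<forall>y\<in>C. y \<noteq> mx \<longrightarrow> ltT y mx" using ex_max_ltT Suc by blast
  have "card (C - {mx}) = n" using Suc mx by simp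
  then obtain xs where xs: "set xs = C - {mx}" "sorted_wrt ltT xs" using Suc.hyps(1)[of "C - {mx}"] Suc.prems by blast
  have "set (xs @ [mx]) = C" using xs mx by auto
  moreover have "sorted_wrt ltT (xs @ [mx])" using xs mx by (auto simp: sorted_wrt_append)
  ultimately show ?case by blast
qed

lemma enumT_props: "finite C \<Longrightarrow> set (enumT C) = C \<and> sorted_wrt ltT (enumT C)"
proof -
  assume "finite C"
  then obtain xs where xs: "set xs = C" "sorted_wrt ltT xs" using ex_sorted by blast
  have "enumT C = xs" unfolding enumT_def
    by (rule the_equality) (use xs sorted_ltT_unique in auto)
  thus ?thesis using xs by simp
qed

lemma below_nth:
  assumes "sorted_wrt ltT xs" "k < length xs"
  shows "card {y \<in> set xs. ltT y (xs ! k)} = k"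
proof -
  have "{y \<in> set xs. ltT y (xs ! k)} = set (take k xs)"
  proof
    show "{y \<in> set xs. ltT y (xs ! k)} \<subseteq> set (take k xs)"
    proof
      fix y assume y: "y \<in> {y \<in> set xs. ltT y (xs ! k)}"
      then obtain a where a: "a < length xs" "y = xs ! a" by (auto simp: in_set_conv_nth)
      have "a < k"
      proof (rule ccontr)
        assume "\<not> a < k"
        hence "a = k \<or> k < a" by auto
        thus False
        proof
          assume "a = k" thus False using y a ltT_irrefl by auto
        next
          assume "k < a"
          hence 1: "ltT (xs ! k) (xs ! a)" using assms a sorted_wrt_nth_less by blast
          have 2: "ltT (xs ! a) (xs ! k)" using y a by simp
          show False using ltT_trans[OF 1 2] ltT_irrefl by simp
        qed
      qed
      thus "y \<in> set (take k xs)" using a by (auto simp: in_set_conv_nth)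
    qed
  next
    show "set (take k xs) \<subseteq> {y \<in> set xs. ltT y (xs ! k)}"
    proof
      fix y assume "y \<in> set (take k xs)"
      then obtain a where a: "a < k" "y = xs ! a" using assms(2) by (auto simp: in_set_conv_nth)
      thus "y \<in> {y \<in> set xs. ltT y (xs ! k)}" using assms sorted_wrt_nth_less by fastforce
    qed
  qed
  moreover have "distinct (take k xs)" using sorted_ltT_distinct[OF assms(1)] by simp
  ultimately show ?thesis using distinct_card assms(2) by fastforce
qed

lemma nth_by_below:
  assumes "sorted_wrt ltT xs" "x \<in> set xs" "card {y \<in> set xs. ltT y x} = k"
  shows "k < length xs \<and> xs ! k = x"
proof -
  obtain a where a: "a < length xs" "x = xs ! a" using assms(2) by (auto simp: in_set_conv_nth)
  have "a = k" using below_nth[OF assms(1) a(1)] a(2) assms(3) by simp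
  thus ?thesis using a by simp
qed

lemma card_swap:
  assumes "finite C" "Q \<in> C" "P \<notin> C" "ltT P Q" "ltT Q z"
  shows "card {y \<in> (C \<union> {P}) - {Q}. ltT y z} = card {y \<in> C. ltT y z}"
proof -
  have Pz: "ltT P z" using ltT_trans[OF assms(4,5)] .
  have PQ: "P \<noteq> Q" using assms(2,3) by blast
  define A where "A = {y \<in> C. ltT y z}"
  have eq: "{y \<in> (C \<union> {P}) - {Q}. ltT y z} = insert P (A - {Q})"
    unfolding A_def using Pz PQ by blast
  have finA: "finite A" unfolding A_def using assms by simp
  have QA: "Q \<in> A" unfolding A_def using assms by simp
  have PA: "P \<notin> A - {Q}" unfolding A_def using assms by simp
  have "card (insert P (A - {Q})) = Suc (card (A - {Q}))" using finA PA by simp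
  also have "\<dots> = card A" using finA QA by (metis card_Suc_Diff1)
  finally show ?thesis using eq A_def by simp
qed

lemma setLtT_swap:
  assumes fin: "finite C" and QC: "Q \<in> C" and PC: "P \<notin> C" and PQ: "ltT P Q"
  shows "setLtT ((C \<union> {P}) - {Q}) C"
proof -
  define C' where "C' = (C \<union> {P}) - {Q}"
  have fin': "finite C'" unfolding C'_def using fin by simp
  define xs where "xs = enumT C'"
  define ys where "ys = enumT C"
  have xs: "set xs = C'" "sorted_wrt ltT xs" using enumT_props[OF fin'] xs_def by auto
  have ys: "set ys = C" "sorted_wrt ltT ys" using enumT_props[OF fin] ys_def by auto
  have PQne: "P \<noteq> Q" using PQ ltT_irrefl by blast
  have "card C' = card C" unfolding C'_def using fin QC PC PQne
    by (simp add: card.insert_remove)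
  hence len: "length xs = length ys"
    using distinct_card[OF sorted_ltT_distinct[OF xs(2)]] distinct_card[OF sorted_ltT_distinct[OF ys(2)]] xs ys by simp
  define k where "k = card {y \<in> C. ltT y Q}"
  have kQ: "k < length ys" "ys ! k = Q" using nth_by_below[OF ys(2), of Q k] ys QC k_def by auto
  have lt: "ltT (xs ! k) (ys ! k)"
  proof (rule ccontr)
    assume nlt: "\<not> ltT (xs ! k) (ys ! k)"
    define z where "z = xs ! k"
    have zC': "z \<in> C'" using xs len kQ z_def by (metis nth_mem)
    have zQ: "z \<noteq> Q" using zC' C'_def by auto
    have nzQ: "\<not> ltT z Q" using nlt kQ(2) z_def by simp
    have Qz: "ltT Q z" using ltT_total[OF zQ] nzQ by blast
    have cz: "card {y \<in> C'. ltT y z} = k" using below_nth[OF xs(2)] len kQ xs z_def by simp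
    have "card {y \<in> C'. ltT y z} = card {y \<in> C. ltT y z}"
      unfolding C'_def by (rule card_swap[OF fin QC PC PQ Qz])
    moreover have "insert Q {y \<in> C. ltT y Q} \<subseteq> {y \<in> C. ltT y z}" using QC Qz ltT_trans[OF _ Qz] by auto
    moreover have "card (insert Q {y \<in> C. ltT y Q}) = k + 1" using fin k_def ltT_irrefl by simp
    moreover have "card (insert Q {y \<in> C. ltT y Q}) \<le> card {y \<in> C. ltT y z}"
      by (rule card_mono) (use fin QC Qz ltT_trans[OF _ Qz] in auto)
    ultimately have "k + 1 \<le> card {y \<in> C'. ltT y z}" by simp
    thus False using cz by simp
  qed
  have rest: "xs ! s' = ys ! s'" if s': "k < s'" "s' < length xs" for s'
  proof -
    define w where "w = ys ! s'"
    have Qw: "ltT Q w" using sorted_wrt_nth_less[OF ys(2) s'(1)] s' len kQ w_def by simp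
    have wC: "w \<in> C" using ys s' len w_def by (metis nth_mem)
    have "w \<noteq> Q" using Qw ltT_irrefl by metis
    hence wC': "w \<in> C'" using wC unfolding C'_def by auto
    have "card {y \<in> C'. ltT y w} = card {y \<in> C. ltT y w}"
      unfolding C'_def by (rule card_swap[OF fin QC PC PQ Qw])
    also have "\<dots> = s'" using below_nth[OF ys(2)] s' len ys w_def by simp
    finally have "xs ! s' = w" using nth_by_below[OF xs(2)] xs wC' by auto
    thus ?thesis using w_def by simp
  qed
  have "length xs = length ys \<and> (\<exists>t < length xs. ltT (xs ! t) (ys ! t) \<and> (\<forall>s'. t < s' \<and> s' < length xs \<longrightarrow> xs ! s' = ys ! s'))"
  proof (intro conjI exI[of _ k])
    show "length xs = length ys" by (rule len)
    show "k < length xs" using len kQ by simp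
    show "ltT (xs ! k) (ys ! k)" by (rule lt)
    show "\<forall>s'. k < s' \<and> s' < length xs \<longrightarrow> xs ! s' = ys ! s'" using rest by blast
  qed
  thus ?thesis unfolding setLtT_def Let_def xs_def ys_def C'_def by blast
qed

definition sw :: "pos \<Rightarrow> pos" where "sw X = (fst (snd X), fst X, snd (snd X))"

lemma sw_sw[simp]: "sw (sw X) = X" unfolding sw_def by simp
lemma sw_inj: "sw X = sw Y \<longleftrightarrow> X = Y" unfolding sw_def by (cases X, cases Y) auto
lemma inj_sw: "inj sw" using sw_inj by (intro injI) simp
lemma sw_img_sw[simp]: "sw ` sw ` D = D" unfolding image_image by simp
lemma sw_mem: "sw X \<in> sw ` D \<longleftrightarrow> X \<in> D" using inj_sw by (rule inj_image_mem_iff)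

lemma L_sw: "X \<in> Lset t s r m \<longleftrightarrow> sw X \<in> Lset s t r m"
  unfolding Lset_def sw_def by (cases X) auto

lemma colOff_sw: "colOff t s r m \<beta> k = rowOff s t r m \<beta> k"
  unfolding colOff_def rowOff_def arrowsT_def arrowsS_def by simp

lemma gridT_sw: "(q,p) \<in> gridT t s r m \<beta> \<longleftrightarrow> (p,q) \<in> gridS s t r m \<beta>"
  unfolding gridT_def gridS_def rowsT_def colsT_def rowsS_def colsS_def arrowsT_def arrowsS_def by auto

lemma phiT_sw:
  assumes "(p,q) \<in> gridS s t r m \<beta>"
  shows "phiT t s r m \<beta> (q,p) = sw (phiS s t r m \<beta> (p,q))"
proof -
  define Y where "Y = phiS s t r m \<beta> (p,q)"
  have Y: "Y \<in> LS s t r m \<beta>" "posS s t r m \<beta> Y = (p,q)" using phiS_in[OF assms] Y_def by auto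
  have swY: "sw Y \<in> LT t s r m \<beta>" using Y(1) L_sw[of "sw Y" t s r m] unfolding LS_def LT_def sw_def arrK_def by auto
  moreover have "posT t s r m \<beta> (sw Y) = (q,p)" using Y(2) unfolding posT_def posS_def sw_def arrK_def colOff_sw by auto
  moreover have "phiT t s r m \<beta> (posT t s r m \<beta> (sw Y)) = sw Y" using phiT_eq[OF swY] .
  thus ?thesis using \<open>posT t s r m \<beta> (sw Y) = (q,p)\<close> Y_def by simp
qed

lemma DT_sw: "DT t s r m \<beta> (sw ` D) = prod.swap ` DS s t r m \<beta> D"
proof (rule set_eqI)
  fix g :: "nat \<times> nat"
  obtain q p where g: "g = (q,p)" by (cases g)
  have "g \<in> DT t s r m \<beta> (sw ` D) \<longleftrightarrow> (p,q) \<in> gridS s t r m \<beta> \<and> phiT t s r m \<beta> (q,p) \<in> sw ` D"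
    unfolding DT_def g by (simp add: gridT_sw)
  also have "\<dots> \<longleftrightarrow> (p,q) \<in> gridS s t r m \<beta> \<and> phiS s t r m \<beta> (p,q) \<in> D"
    using phiT_sw[of p q s t r m \<beta>] sw_mem by (metis (no_types))
  also have "\<dots> \<longleftrightarrow> g \<in> prod.swap ` DS s t r m \<beta> D" unfolding DS_def g by auto
  finally show "g \<in> DT t s r m \<beta> (sw ` D) \<longleftrightarrow> g \<in> prod.swap ` DS s t r m \<beta> D" .
qed

lemma DS_sw: "DS t s r m \<alpha> (sw ` D) = prod.swap ` DT s t r m \<alpha> D"
proof -
  have "DT s t r m \<alpha> (sw ` (sw ` D)) = prod.swap ` DS t s r m \<alpha> (sw ` D)" by (rule DT_sw)
  hence "prod.swap ` DT s t r m \<alpha> D = prod.swap ` prod.swap ` DS t s r m \<alpha> (sw ` D)" by simp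
  thus ?thesis by (simp add: image_image)
qed

lemma chain_sw: "has_diag_chain (prod.swap ` S) n \<longleftrightarrow> has_diag_chain S n"
proof
  assume "has_diag_chain (prod.swap ` S) n"
  then obtain f where f: "\<forall>a\<in>{1..n}. f a \<in> prod.swap ` S"
    "\<forall>a b. 1 \<le> a \<and> a < b \<and> b \<le> n \<longrightarrow> fst (f a) < fst (f b) \<and> snd (f a) < snd (f b)"
    unfolding has_diag_chain_def by blast
  have "\<forall>a\<in>{1..n}. prod.swap (f a) \<in> S" using f(1) by auto
  moreover have "\<forall>a b. 1 \<le> a \<and> a < b \<and> b \<le> n \<longrightarrow> fst (prod.swap (f a)) < fst (prod.swap (f b)) \<and> snd (prod.swap (f a)) < snd (prod.swap (f b))"
    using f(2) by auto
  ultimately show "has_diag_chain S n" unfolding has_diag_chain_def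
    by (intro exI[of _ "\<lambda>a. prod.swap (f a)"]) simp
next
  assume "has_diag_chain S n"
  then obtain f where f: "\<forall>a\<in>{1..n}. f a \<in> S"
    "\<forall>a b. 1 \<le> a \<and> a < b \<and> b \<le> n \<longrightarrow> fst (f a) < fst (f b) \<and> snd (f a) < snd (f b)"
    unfolding has_diag_chain_def by blast
  have "\<forall>a\<in>{1..n}. prod.swap (f a) \<in> prod.swap ` S" using f(1) by auto
  moreover have "\<forall>a b. 1 \<le> a \<and> a < b \<and> b \<le> n \<longrightarrow> fst (prod.swap (f a)) < fst (prod.swap (f b)) \<and> snd (prod.swap (f a)) < snd (prod.swap (f b))"
    using f(2) by auto
  ultimately show "has_diag_chain (prod.swap ` S) n" unfolding has_diag_chain_def
    by (intro exI[of _ "\<lambda>a. prod.swap (f a)"]) simp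
qed

lemma compat_sw: "u_compatible Vt Vs t s r m u (sw ` D) \<longleftrightarrow> u_compatible Vs Vt s t r m u D"
proof -
  have "sw ` D \<subseteq> Lset t s r m \<longleftrightarrow> D \<subseteq> Lset s t r m"
  proof -
    have "sw x \<in> Lset t s r m \<longleftrightarrow> x \<in> Lset s t r m" for x using L_sw[of "sw x" t s r m] by simp
    thus ?thesis by blast
  qed
  thus ?thesis unfolding u_compatible_def DT_sw DS_sw chain_sw by blast
qed

lemma conc_sw: "concurrent_vertex_map Vt Vs t s r m u (sw ` C) \<longleftrightarrow> concurrent_vertex_map Vs Vt s t r m u C"
proof
  assume a: "concurrent_vertex_map Vt Vs t s r m u (sw ` C)"
  have c: "u_compatible Vs Vt s t r m u C"
    using a compat_sw[of Vt Vs t s r m u C] unfolding concurrent_vertex_map_def by blast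
  have "D = C" if d: "u_compatible Vs Vt s t r m u D" "C \<subseteq> D" for D
  proof -
    have "u_compatible Vt Vs t s r m u (sw ` D)" using d(1) compat_sw[of Vt Vs t s r m u D] by blast
    moreover have "sw ` C \<subseteq> sw ` D" using d(2) by (rule image_mono)
    ultimately have "sw ` D = sw ` C" using a unfolding concurrent_vertex_map_def by blast
    hence "sw ` sw ` D = sw ` sw ` C" by (rule arg_cong)
    thus ?thesis by simp
  qed
  thus "concurrent_vertex_map Vs Vt s t r m u C" using c unfolding concurrent_vertex_map_def by blast
next
  assume a: "concurrent_vertex_map Vs Vt s t r m u C"
  have c: "u_compatible Vt Vs t s r m u (sw ` C)"
    using a compat_sw[of Vt Vs t s r m u C] unfolding concurrent_vertex_map_def by blast
  have "D = sw ` C" if d: "u_compatible Vt Vs t s r m u D" "sw ` C \<subseteq> D" for D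
  proof -
    have "u_compatible Vt Vs t s r m u (sw ` (sw ` D))" using d(1) by simp
    hence "u_compatible Vs Vt s t r m u (sw ` D)" using compat_sw[of Vt Vs t s r m u "sw ` D"] by blast
    moreover have "sw ` sw ` C \<subseteq> sw ` D" using d(2) by (rule image_mono)
    hence "C \<subseteq> sw ` D" by simp
    ultimately have "sw ` D = C" using a unfolding concurrent_vertex_map_def by blast
    hence "sw ` sw ` D = sw ` C" by (rule arg_cong)
    thus ?thesis by simp
  qed
  thus "concurrent_vertex_map Vt Vs t s r m u (sw ` C)" using c unfolding concurrent_vertex_map_def by blast
qed

lemma vchute_sw:
  assumes "vchute Vs s t r m D D'"
  shows "hchute Vs t s r m (sw ` D) (sw ` D')"
proof -
  obtain \<beta> i j l where A: "\<beta> \<in> Vs" "2 \<le> l" "1 \<le> i" "i + l - 1 \<le> rowsS s t r m \<beta>" "1 \<le> j"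
    "j + 1 \<le> colsS s t r m \<beta>"
    "DS s t r m \<beta> D \<inter> ({i..i+l-1} \<times> {j..j+1}) = {(i+l-1, j), (i, j+1), (i+l-1, j+1)}"
    "D' = (D \<union> {phiS s t r m \<beta> (i, j)}) - {phiS s t r m \<beta> (i+l-1, j+1)}"
    using assms unfolding vchute_def by blast
  have g1: "(i,j) \<in> gridS s t r m \<beta>" "(i+l-1,j+1) \<in> gridS s t r m \<beta>" using A unfolding gridS_def by auto
  have rT: "rowsT t s r m \<beta> = colsS s t r m \<beta>" "colsT t s r m \<beta> = rowsS s t r m \<beta>"
    unfolding rowsT_def colsT_def rowsS_def colsS_def arrowsT_def arrowsS_def by auto
  have "DT t s r m \<beta> (sw ` D) \<inter> ({j..j+1} \<times> {i..i+l-1}) = prod.swap ` (DS s t r m \<beta> D \<inter> ({i..i+l-1} \<times> {j..j+1}))"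
    unfolding DT_sw image_Int[OF inj_swap] product_swap ..
  also have "\<dots> = {(j+1, i), (j, i+l-1), (j+1, i+l-1)}" unfolding A(7) by (simp add: insert_commute)
  finally have pat: "DT t s r m \<beta> (sw ` D) \<inter> ({j..j+1} \<times> {i..i+l-1}) = {(j+1, i), (j, i+l-1), (j+1, i+l-1)}" .
  have D': "sw ` D' = (sw ` D \<union> {phiT t s r m \<beta> (j, i)}) - {phiT t s r m \<beta> (j+1, i+l-1)}"
    unfolding A(8) phiT_sw[OF g1(1)] phiT_sw[OF g1(2)] image_set_diff[OF inj_sw] by simp
  have b: "1 \<le> j" "j + 1 \<le> rowsT t s r m \<beta>" "1 \<le> i" "i + l - 1 \<le> colsT t s r m \<beta>"
    using A rT by auto
  show ?thesis unfolding hchute_def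
    by (rule bexI[of _ \<beta>], rule exI[of _ j], rule exI[of _ i], rule exI[of _ l]) (use A(1,2) b pat D' in blast)+
qed


lemma H_ord:
  assumes "hchute Vt s t r m C C'"
  shows "\<exists>P Q. C' = (C \<union> {P}) - {Q} \<and> P \<notin> C \<and> Q \<in> C \<and> ltT P Q \<and> ltT (sw P) (sw Q)"
proof -
  obtain \<alpha> i c0 c1 where A: "\<alpha> \<in> Vt" "1 \<le> i" "i+1 \<le> rowsT s t r m \<alpha>" "1 \<le> c0" "c0 < c1" "c1 \<le> colsT s t r m \<alpha>"
    "phiT s t r m \<alpha> (i+1,c1) \<in> C" "phiT s t r m \<alpha> (i,c0) \<notin> C"
    "C' = (C \<union> {phiT s t r m \<alpha> (i,c0)}) - {phiT s t r m \<alpha> (i+1,c1)}"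
    using hchute_unf[OF assms] by blast
  obtain aP bQ kP kQ where H: "phiT s t r m \<alpha> (i,c0) = (i,aP,kP)" "phiT s t r m \<alpha> (i+1,c1) = (i+1,bQ,kQ)"
     "kP \<le> kQ" "kP = kQ \<longrightarrow> aP < bQ"
    using hconf[OF A(2-6)] by blast
  have "ltT (i,aP,kP) (i+1,bQ,kQ)" unfolding ltT_def using H(3) by auto
  moreover have "ltT (sw (i,aP,kP)) (sw (i+1,bQ,kQ))" unfolding ltT_def sw_def using H(3,4) by auto
  ultimately show ?thesis using A(7-9) H(1,2) by (intro exI[of _ "(i,aP,kP)"] exI[of _ "(i+1,bQ,kQ)"]) simp
qed

lemma ord_any:
  assumes "chute_move Vs Vt s t r m C C'"
  shows "\<exists>P Q. C' = (C \<union> {P}) - {Q} \<and> P \<notin> C \<and> Q \<in> C \<and> ltT P Q"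
proof (cases "hchute Vt s t r m C C'")
  case True thus ?thesis using H_ord by blast
next
  case False
  hence "vchute Vs s t r m C C'" using assms unfolding chute_move_def by blast
  hence "hchute Vs t s r m (sw ` C) (sw ` C')" by (rule vchute_sw)
  then obtain P Q where PQ: "sw ` C' = (sw ` C \<union> {P}) - {Q}" "P \<notin> sw ` C" "Q \<in> sw ` C" "ltT (sw P) (sw Q)"
    using H_ord by blast
  have "sw ` sw ` C' = sw ` ((sw ` C \<union> {P}) - {Q})" using PQ(1) by simp
  hence "C' = (C \<union> {sw P}) - {sw Q}" unfolding image_set_diff[OF inj_sw] by simp
  moreover have "sw P \<notin> C" using PQ(2) sw_mem[of "sw P" C] by simp
  moreover have "sw Q \<in> C" using PQ(3) sw_mem[of "sw Q" C] by simp
  ultimately show ?thesis using PQ(4) by blast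
qed

lemma fin_L: "finite (Lset s t r m)"
proof -
  have "Lset s t r m \<subseteq> (\<Union>k\<in>{1..r}. {1..m (t k)} \<times> {1..m (s k)} \<times> {k})" unfolding Lset_def by auto
  moreover have "finite (\<Union>k\<in>{1..r}. {1..m (t k)} \<times> {1..m (s k)} \<times> {k})" by simp
  ultimately show ?thesis by (rule finite_subset)
qed

lemma chute_compat:
  assumes "u_compatible Vs Vt s t r m u D" "chute_move Vs Vt s t r m D D'"
  shows "u_compatible Vs Vt s t r m u D'"
proof (cases "hchute Vt s t r m D D'")
  case True thus ?thesis using H1 assms(1) by blast
next
  case False
  hence "vchute Vs s t r m D D'" using assms unfolding chute_move_def by blast
  hence h: "hchute Vs t s r m (sw ` D) (sw ` D')" by (rule vchute_sw)
  have "u_compatible Vt Vs t s r m u (sw ` D)" using assms(1) compat_sw[of Vt Vs t s r m u D] by blast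
  hence "u_compatible Vt Vs t s r m u (sw ` D')" using H1 h by blast
  thus ?thesis using compat_sw[of Vt Vs t s r m u D'] by blast
qed

lemma inv_chute_compat:
  assumes "u_compatible Vs Vt s t r m u D" "chute_move Vs Vt s t r m D' D"
  shows "u_compatible Vs Vt s t r m u D'"
proof (cases "hchute Vt s t r m D' D")
  case True thus ?thesis using H3 assms(1) by blast
next
  case False
  hence "vchute Vs s t r m D' D" using assms unfolding chute_move_def by blast
  hence h: "hchute Vs t s r m (sw ` D') (sw ` D)" by (rule vchute_sw)
  have "u_compatible Vt Vs t s r m u (sw ` D)" using assms(1) compat_sw[of Vt Vs t s r m u D] by blast
  hence "u_compatible Vt Vs t s r m u (sw ` D')" using H3 h by blast
  thus ?thesis using compat_sw[of Vt Vs t s r m u D'] by blast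
qed

lemma chute_conc:
  assumes "concurrent_vertex_map Vs Vt s t r m u C" "chute_move Vs Vt s t r m C C'"
  shows "concurrent_vertex_map Vs Vt s t r m u C'"
proof (cases "hchute Vt s t r m C C'")
  case True thus ?thesis using H2 assms(1) by blast
next
  case False
  hence "vchute Vs s t r m C C'" using assms unfolding chute_move_def by blast
  hence h: "hchute Vs t s r m (sw ` C) (sw ` C')" by (rule vchute_sw)
  have "concurrent_vertex_map Vt Vs t s r m u (sw ` C)" using assms(1) conc_sw[of Vt Vs t s r m u C] by blast
  hence "concurrent_vertex_map Vt Vs t s r m u (sw ` C')" using H2 h by blast
  thus ?thesis using conc_sw[of Vt Vs t s r m u C'] by blast
qed

lemma inv_chute_conc:
  assumes "concurrent_vertex_map Vs Vt s t r m u C" "chute_move Vs Vt s t r m C' C"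
  shows "concurrent_vertex_map Vs Vt s t r m u C'"
proof (cases "hchute Vt s t r m C' C")
  case True thus ?thesis using H4 assms(1) by blast
next
  case False
  hence "vchute Vs s t r m C' C" using assms unfolding chute_move_def by blast
  hence h: "hchute Vs t s r m (sw ` C') (sw ` C)" by (rule vchute_sw)
  have "concurrent_vertex_map Vt Vs t s r m u (sw ` C)" using assms(1) conc_sw[of Vt Vs t s r m u C] by blast
  hence "concurrent_vertex_map Vt Vs t s r m u (sw ` C')" using H4 h by blast
  thus ?thesis using conc_sw[of Vt Vs t s r m u C'] by blast
qed

theorem lemma3p9:
  fixes Vs Vt :: "'v set" and s t :: "nat \<Rightarrow> 'v" and r :: nat and m u :: "'v \<Rightarrow> nat"
  assumes "standing Vs Vt s t r m u"
  shows "(\<forall>D D'. u_compatible Vs Vt s t r m u D \<and> chute_move Vs Vt s t r m D D'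
                 \<longrightarrow> u_compatible Vs Vt s t r m u D')
       \<and> (\<forall>C C'. concurrent_vertex_map Vs Vt s t r m u C \<and> chute_move Vs Vt s t r m C C'
                 \<longrightarrow> concurrent_vertex_map Vs Vt s t r m u C' \<and> setLtT C' C)
       \<and> (\<forall>D D'. u_compatible Vs Vt s t r m u D \<and> inv_chute_move Vs Vt s t r m D D'
                 \<longrightarrow> u_compatible Vs Vt s t r m u D')
       \<and> (\<forall>C C'. concurrent_vertex_map Vs Vt s t r m u C \<and> inv_chute_move Vs Vt s t r m C C'
                 \<longrightarrow> concurrent_vertex_map Vs Vt s t r m u C' \<and> setLtT C C')"
proof (intro conjI allI impI)
  fix D D' assume a: "u_compatible Vs Vt s t r m u D \<and> chute_move Vs Vt s t r m D D'"
  thus "u_compatible Vs Vt s t r m u D'" using chute_compat by blast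
next
  fix C C' assume a: "concurrent_vertex_map Vs Vt s t r m u C \<and> chute_move Vs Vt s t r m C C'"
  thus "concurrent_vertex_map Vs Vt s t r m u C'" using chute_conc by blast
  have fin: "finite C" using a fin_L[of s t r m] unfolding concurrent_vertex_map_def u_compatible_def
    by (meson finite_subset)
  obtain P Q where PQ: "C' = (C \<union> {P}) - {Q}" "P \<notin> C" "Q \<in> C" "ltT P Q" using ord_any a by blast
  show "setLtT C' C" unfolding PQ(1) by (rule setLtT_swap[OF fin PQ(3,2,4)])
next
  fix D D' assume a: "u_compatible Vs Vt s t r m u D \<and> inv_chute_move Vs Vt s t r m D D'"
  thus "u_compatible Vs Vt s t r m u D'" using inv_chute_compat unfolding inv_chute_move_def by blast
next
  fix C C' assume a: "concurrent_vertex_map Vs Vt s t r m u C \<and> inv_chute_move Vs Vt s t r m C C'"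
  hence c': "concurrent_vertex_map Vs Vt s t r m u C'" using inv_chute_conc unfolding inv_chute_move_def by blast
  thus "concurrent_vertex_map Vs Vt s t r m u C'" .
  have fin: "finite C'" using c' fin_L[of s t r m] unfolding concurrent_vertex_map_def u_compatible_def
    by (meson finite_subset)
  obtain P Q where PQ: "C = (C' \<union> {P}) - {Q}" "P \<notin> C'" "Q \<in> C'" "ltT P Q"
    using ord_any a unfolding inv_chute_move_def by blast
  show "setLtT C C'" unfolding PQ(1) by (rule setLtT_swap[OF fin PQ(3,2,4)])
qed

end
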